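(* Let $K\subset\mathbb{R}^n$ be a closed set whose complement $K^c$ is a bounded open set, $\alpha\ge0$ and $\lambda>0$. Let $y\in(K^{\oplus\alpha})^c\setminus\mathrm{ax}_\lambda^\alpha(K)$ and let $s\mapsto y(s)$ be the trajectory $t\mapsto\Phi_K(t,y)$ parametrized by arc length, so $y(0)=y$. Assume $R_K(y)-\alpha>\lambda$ and that for some $S>0$, $y(S)\notin\mathrm{ax}_\lambda^\alpha(K)$. Then $$\big(R_K(y(S))-\alpha\big)^2\ge(S_0+S)^2+\lambda^2,$$ where $S_0>0$ is defined by $S_0^2=(R_K(y)-\alpha)^2-\lambda^2$.
   Context: For a closed set $K\subset\mathbb{R}^n$ with bounded open complement: $R_K(x)=d(x,K)$; $\Theta_K(x)=\{y\in K:\|x-y\|=R_K(x)\}$; for bounded $S$, $\mathrm{center}(S)$ and $\mathrm{radius}(S)$ are the center and radius of the smallest ball enclosing $S$; $\mathcal F_K(x)=\mathrm{radius}(\Theta_K(x))$; for $x\notin K$, $\nabla_K(x)=(x-\mathrm{center}(\Theta_K(x)))/R_K(x)$. $\Phi_K:[0,\infty)\times K^c\to K^c$ is the flow of $\nabla_K$: the continuous (locally Lipschitz) semiflow with $\Phi_K(0,x)=x$, $\Phi_K(t_1,\Phi_K(t_2,x))=\Phi_K(t_1+t_2,x)$ and right derivative $\frac{d}{dt^+}\Phi_K(t,x)=\nabla_K(\Phi_K(t,x))$. $K^{\oplus\alpha}=\{x:d(x,K)\le\alpha\}$. $\mathrm{ax}_\lambda^\alpha(K)=\{x:\mathcal F_{K^{\oplus\alpha}}(x)\ge\lambda\}$.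 *)

theory Defs
  imports "HOL-Analysis.Analysis"
begin

definition distK :: "'a::euclidean_space set \<Rightarrow> 'a \<Rightarrow> real" where
  "distK K x = infdist x K"

definition Theta :: "'a::euclidean_space set \<Rightarrow> 'a \<Rightarrow> 'a set" where
  "Theta K x = {y \<in> K. dist x y = distK K x}"

definition enc_radius :: "'a::euclidean_space set \<Rightarrow> real" where
  "enc_radius S = Inf {r. \<exists>c. S \<subseteq> cball c r}"

definition enc_center :: "'a::euclidean_space set \<Rightarrow> 'a" where
  "enc_center S = (SOME c. S \<subseteq> cball c (enc_radius S))"

definition FK :: "'a::euclidean_space set \<Rightarrow> 'a \<Rightarrow> real" where
  "FK K x = enc_radius (Theta K x)"

definition gradK :: "'a::euclidean_space set \<Rightarrow> 'a \<Rightarrow> 'a" where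
  "gradK K x = (x - enc_center (Theta K x)) /\<^sub>R distK K x"

definition is_flow :: "'a::euclidean_space set \<Rightarrow> (real \<Rightarrow> 'a \<Rightarrow> 'a) \<Rightarrow> bool" where
  "is_flow K Phi \<longleftrightarrow>
     (\<forall>t\<ge>0. \<forall>x\<in>-K. Phi t x \<in> -K) \<and>
     (\<forall>x\<in>-K. Phi 0 x = x) \<and>
     (\<forall>t1\<ge>0. \<forall>t2\<ge>0. \<forall>x\<in>-K. Phi t1 (Phi t2 x) = Phi (t1 + t2) x) \<and>
     continuous_on ({0..} \<times> -K) (\<lambda>(t, x). Phi t x) \<and>
     (\<forall>x\<in>-K. \<forall>t\<ge>0. ((\<lambda>s. Phi s x) has_vector_derivative gradK K (Phi t x)) (at t within {t..}))"

definition offset :: "'a::euclidean_space set \<Rightarrow> real \<Rightarrow> 'a set" where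
  "offset K \<alpha> = {x. infdist x K \<le> \<alpha>}"

definition axis :: "real \<Rightarrow> real \<Rightarrow> 'a::euclidean_space set \<Rightarrow> 'a set" where
  "axis l \<alpha> K = {x. FK (offset K \<alpha>) x \<ge> l}"

definition arc_length :: "(real \<Rightarrow> 'a::metric_space) \<Rightarrow> real \<Rightarrow> real \<Rightarrow> real" where
  "arc_length \<gamma> a b = Sup {(\<Sum>i<n. dist (\<gamma> (p i)) (\<gamma> (p (Suc i)))) | p n.
       p 0 = a \<and> p n = b \<and> (\<forall>i<n. p i \<le> p (Suc i))}"

end

theory Submission imports Defs begin

lemma K_nonempty:
  fixes K :: "'a::euclidean_space set"
  assumes "bounded (- K)" shows "K \<noteq> {}"
  using assms not_bounded_UNIV by force

lemma enc_lower:
  fixes S :: "'a::euclidean_space set"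
  assumes "S \<noteq> {}" "S \<subseteq> cball c r"
  shows "enc_radius S \<le> r"
proof -
  have bdd: "bdd_below {r. \<exists>c. S \<subseteq> cball c r}"
  proof (rule bdd_belowI[of _ 0])
    fix r assume "r \<in> {r. \<exists>c. S \<subseteq> cball c r}"
    then obtain c where "S \<subseteq> cball c r" by auto
    with assms(1) obtain s where "s \<in> S" "dist c s \<le> r" by (auto simp: subset_iff)
    then show "0 \<le> r" by (meson dual_order.trans zero_le_dist)
  qed
  show ?thesis unfolding enc_radius_def
    by (rule cInf_lower[OF _ bdd]) (use assms in auto)
qed

lemma enc_attained:
  fixes S :: "'a::euclidean_space set"
  assumes "compact S" "S \<noteq> {}"
  shows "S \<subseteq> cball (enc_center S) (enc_radius S)"
proof -
  obtain s0 where s0: "s0 \<in> S" using assms by auto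
  obtain r0 where "\<forall>y\<in>S. dist s0 y \<le> r0"
    using compact_imp_bounded[OF assms(1)] bounded_any_center by blast
  then have r0: "S \<subseteq> cball s0 r0" by auto
  have "s0 \<in> cball s0 r0" using r0 s0 by auto
  then have r0pos: "r0 \<ge> 0" by simp
  define A where "A = {p::'a\<times>real. \<forall>s\<in>S. dist (fst p) s \<le> snd p} \<inter> (cball s0 r0 \<times> {0..r0})"
  have cl: "closed {p::'a\<times>real. \<forall>s\<in>S. dist (fst p) s \<le> snd p}"
  proof -
    have "{p::'a\<times>real. \<forall>s\<in>S. dist (fst p) s \<le> snd p} = (\<Inter>s\<in>S. {p. dist (fst p) s \<le> snd p})" by auto
    moreover have "closed {p::'a\<times>real. dist (fst p) s \<le> snd p}" for s
      by (intro closed_Collect_le continuous_intros)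
    ultimately show ?thesis by auto
  qed
  have "compact A" unfolding A_def
    by (intro closed_Int_compact cl compact_Times compact_cball compact_Icc)
  moreover have "A \<noteq> {}"
  proof -
    have "(s0, r0) \<in> A" using r0 r0pos unfolding A_def by (auto simp: subset_iff)
    then show ?thesis by auto
  qed
  moreover have "continuous_on A snd" by (intro continuous_intros)
  ultimately obtain p where pA: "p \<in> A" and pmin: "\<forall>q\<in>A. snd p \<le> snd q"
    using continuous_attains_inf[of A snd] by blast
  have sub: "S \<subseteq> cball (fst p) (snd p)" using pA unfolding A_def by auto
  have "enc_radius S = snd p"
  proof (rule antisym)
    show "enc_radius S \<le> snd p" by (rule enc_lower[OF assms(2) sub])
    show "snd p \<le> enc_radius S" unfolding enc_radius_def
    proof (rule cInf_greatest)
      show "{r. \<exists>c. S \<subseteq> cball c r} \<noteq> {}" using sub by auto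
      fix r assume "r \<in> {r. \<exists>c. S \<subseteq> cball c r}"
      then obtain c where c: "S \<subseteq> cball c r" by auto
      have "dist c s0 \<le> r" using c s0 by auto
      hence rnn: "0 \<le> r" by (meson order_trans zero_le_dist)
      show "snd p \<le> r"
      proof (cases "r \<le> r0")
        case True
        have "(c, r) \<in> A" unfolding A_def using c True rnn \<open>dist c s0 \<le> r\<close>
          by (auto simp: subset_iff dist_commute)
        then show ?thesis using pmin by force
      next
        case False
        have "(s0, r0) \<in> A" using r0 r0pos unfolding A_def by (auto simp: subset_iff)
        then show ?thesis using pmin False by force
      qed
    qed
  qed
  then have "\<exists>c. S \<subseteq> cball c (enc_radius S)" using sub by auto
  then show ?thesis unfolding enc_center_def by (rule someI_ex)
qed

lemma Theta_basic:
  fixes K :: "'a::euclidean_space set"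
  assumes "closed K" "K \<noteq> {}" "x \<notin> K"
  shows "distK K x > 0" "Theta K x \<noteq> {}" "compact (Theta K x)"
    "\<And>\<theta>. \<theta> \<in> Theta K x \<Longrightarrow> \<theta> \<in> K \<and> dist x \<theta> = distK K x"
proof -
  show "distK K x > 0" unfolding distK_def using assms infdist_pos_not_in_closed by blast
  obtain k where "k \<in> K" "infdist x K = dist x k" using infdist_attains_inf[OF assms(1,2)] by blast
  then show "Theta K x \<noteq> {}" unfolding Theta_def distK_def by auto
  have "Theta K x = K \<inter> sphere x (distK K x)" unfolding Theta_def by auto
  then show "compact (Theta K x)" using assms(1) by (simp add: closed_Int_compact)
  fix \<theta> assume "\<theta> \<in> Theta K x" then show "\<theta> \<in> K \<and> dist x \<theta> = distK K x" unfolding Theta_def by auto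
qed

lemma nsq_add: "(norm (u + v))\<^sup>2 = (norm u)\<^sup>2 + 2 * (u \<bullet> v) + (norm (v::'a::real_inner))\<^sup>2"
  using dot_norm[of u v] by simp

lemma nsq_diff: "(norm (u - v))\<^sup>2 = (norm u)\<^sup>2 - 2 * (u \<bullet> v) + (norm (v::'a::real_inner))\<^sup>2"
  using nsq_add[of u "-v"] by simp

lemma nsq_scale: "(norm (r *\<^sub>R (v::'a::real_normed_vector)))\<^sup>2 = r\<^sup>2 * (norm v)\<^sup>2"
  by (simp add: power_mult_distrib)

lemma enc_nonneg:
  fixes S :: "'a::euclidean_space set"
  assumes "compact S" "S \<noteq> {}" shows "enc_radius S \<ge> 0"
proof -
  obtain s where "s \<in> S" using assms by auto
  then have "dist (enc_center S) s \<le> enc_radius S" using enc_attained[OF assms] by auto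
  then show ?thesis by (meson order_trans zero_le_dist)
qed

lemma enc_no_smaller:
  fixes S :: "'a::euclidean_space set"
  assumes "compact S" "S \<noteq> {}" "\<forall>\<theta>\<in>S. (dist c' \<theta>)\<^sup>2 \<le> M" "M < (enc_radius S)\<^sup>2"
  shows False
proof -
  have "S \<subseteq> cball c' (sqrt M)"
  proof
    fix \<theta> assume "\<theta> \<in> S"
    then have "(dist c' \<theta>)\<^sup>2 \<le> M" using assms by auto
    then have "dist c' \<theta> \<le> sqrt M" by (simp add: real_le_rsqrt)
    then show "\<theta> \<in> cball c' (sqrt M)" by simp
  qed
  then have "enc_radius S \<le> sqrt M" by (rule enc_lower[OF assms(2)])
  moreover have "enc_radius S \<ge> 0" by (rule enc_nonneg[OF assms(1,2)])
  moreover obtain s where "s \<in> S" using assms by auto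
  then have "M \<ge> 0" using assms(3) by (meson order_trans zero_le_power2)
  ultimately have "(enc_radius S)\<^sup>2 \<le> (sqrt M)\<^sup>2"
    by (intro power_mono) auto
  then have "(enc_radius S)\<^sup>2 \<le> M" using \<open>M \<ge> 0\<close> by simp
  then show False using assms(4) by simp
qed

lemma enc_center_hull:
  fixes S :: "'a::euclidean_space set"
  assumes "compact S" "S \<noteq> {}"
  shows "enc_center S \<in> convex hull S"
proof (rule ccontr)
  define c where "c = enc_center S"
  define F where "F = enc_radius S"
  assume "enc_center S \<notin> convex hull S"
  then have "c \<notin> convex hull S" using c_def by simp
  moreover have "closed (convex hull S)" by (simp add: assms(1) compact_convex_hull compact_imp_closed)
  ultimately obtain a b where ab: "a \<bullet> c < b" "\<forall>z\<in>convex hull S. b < a \<bullet> z"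
    using separating_hyperplane_closed_point[OF convex_convex_hull] by metis
  obtain s0 where "s0 \<in> S" using assms by auto
  then have "s0 \<in> convex hull S" by (rule hull_inc)
  then have "b < a \<bullet> s0" using ab by blast
  then have "a \<noteq> 0" using ab by auto
  then have aa: "a \<bullet> a > 0" by simp
  define \<eta> where "\<eta> = b - a \<bullet> c"
  have eta: "\<eta> > 0" using ab \<eta>_def by simp
  define \<epsilon> where "\<epsilon> = \<eta> / (a \<bullet> a)"
  have eps: "\<epsilon> > 0" "\<epsilon> * (a \<bullet> a) = \<eta>" using eta aa \<epsilon>_def by auto
  have "\<forall>\<theta>\<in>S. (dist (c + \<epsilon> *\<^sub>R a) \<theta>)\<^sup>2 \<le> F\<^sup>2 - \<epsilon> * \<eta>"
  proof
    fix \<theta> assume th: "\<theta> \<in> S"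
    have "dist c \<theta> \<le> F" using enc_attained[OF assms] th c_def F_def by auto
    then have q: "(norm (\<theta> - c))\<^sup>2 \<le> F\<^sup>2" by (simp add: dist_norm norm_minus_commute power_mono)
    have "\<theta> \<in> convex hull S" using th by (rule hull_inc)
    then have "b < a \<bullet> \<theta>" using ab by blast
    then have t: "a \<bullet> (\<theta> - c) > \<eta>" using \<eta>_def by (simp add: inner_diff_right)
    have d: "(dist (c + \<epsilon> *\<^sub>R a) \<theta>)\<^sup>2 = (norm (\<theta> - c))\<^sup>2 - 2 * \<epsilon> * (a \<bullet> (\<theta> - c)) + \<epsilon>\<^sup>2 * (a \<bullet> a)"
    proof -
      have "dist (c + \<epsilon> *\<^sub>R a) \<theta> = norm ((\<theta> - c) - \<epsilon> *\<^sub>R a)" by (simp add: dist_norm norm_minus_commute algebra_simps)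
      then show ?thesis using nsq_diff[of "\<theta> - c" "\<epsilon> *\<^sub>R a"] nsq_scale[of \<epsilon> a]
        by (simp add: power2_norm_eq_inner[of a] inner_commute)
    qed
    have e2: "\<epsilon>\<^sup>2 * (a \<bullet> a) = \<epsilon> * \<eta>" using eps(2) by (simp add: power2_eq_square)
    have "\<epsilon> * (a \<bullet> (\<theta> - c)) \<ge> \<epsilon> * \<eta>" using t eps(1) by (intro mult_left_mono) auto
    then show "(dist (c + \<epsilon> *\<^sub>R a) \<theta>)\<^sup>2 \<le> F\<^sup>2 - \<epsilon> * \<eta>" using e2 q d by linarith
  qed
  moreover have "F\<^sup>2 - \<epsilon> * \<eta> < F\<^sup>2" using eps eta by simp
  ultimately show False using enc_no_smaller[OF assms] F_def by blast
qed


lemma enc_pyth: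
  fixes S :: "'a::euclidean_space set"
  assumes S: "compact S" "S \<noteq> {}" and sph: "\<forall>\<theta>\<in>S. dist x \<theta> = R"
  shows "(enc_radius S)\<^sup>2 = R\<^sup>2 - (norm (x - enc_center S))\<^sup>2"
proof -
  define c where "c = enc_center S"
  define F where "F = enc_radius S"
  define w where "w = norm (x - c)"
  have inb: "\<And>\<theta>. \<theta> \<in> S \<Longrightarrow> dist c \<theta> \<le> F" using enc_attained[OF S] c_def F_def by auto
  have F0: "F \<ge> 0" using enc_nonneg[OF S] F_def by simp
  obtain s0 where s0: "s0 \<in> S" using S by auto
  have R0: "R \<ge> 0" using sph s0 by force
  have key: "\<And>\<theta>. \<theta> \<in> S \<Longrightarrow> R\<^sup>2 = (norm (\<theta> - c))\<^sup>2 + 2 * ((\<theta> - c) \<bullet> (c - x)) + w\<^sup>2"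
  proof -
    fix \<theta> assume "\<theta> \<in> S"
    then have "R = norm ((\<theta> - c) + (c - x))" using sph by (auto simp: dist_norm norm_minus_commute)
    then show "R\<^sup>2 = (norm (\<theta> - c))\<^sup>2 + 2 * ((\<theta> - c) \<bullet> (c - x)) + w\<^sup>2"
      using nsq_add[of "\<theta> - c" "c - x"] w_def by (simp add: norm_minus_commute)
  qed
  have qF: "\<And>\<theta>. \<theta> \<in> S \<Longrightarrow> (norm (\<theta> - c))\<^sup>2 \<le> F\<^sup>2"
    using inb by (simp add: dist_norm norm_minus_commute power_mono)
  have "F\<^sup>2 = R\<^sup>2 - w\<^sup>2"
  proof (cases "w = 0")
    case True
    then have cx: "c = x" using w_def by simp
    have "S \<subseteq> cball x R" using sph by auto
    then have "F \<le> R" using enc_lower[OF S(2)] F_def by blast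
    moreover have "R \<le> F" using inb[OF s0] sph s0 cx by auto
    ultimately show ?thesis using True by simp
  next
    case False
    then have w0: "w > 0" using w_def by simp
    show ?thesis
    proof (rule ccontr)
      assume ne: "F\<^sup>2 \<noteq> R\<^sup>2 - w\<^sup>2"
      show False
      proof (cases "F\<^sup>2 > R\<^sup>2 - w\<^sup>2")
        case True
        define D where "D = F\<^sup>2 - R\<^sup>2 + w\<^sup>2"
        have D0: "D > 0" using True D_def by simp
        define s where "s = min 1 (D / (2 * w\<^sup>2))"
        have s0': "s > 0" "s \<le> 1" "s * w\<^sup>2 \<le> D / 2" using D0 w0 s_def
          by (auto simp: min_def field_simps)
        have "\<forall>\<theta>\<in>S. (dist (c + s *\<^sub>R (x - c)) \<theta>)\<^sup>2 \<le> F\<^sup>2 - s * D / 2"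
        proof
          fix \<theta> assume th: "\<theta> \<in> S"
          define q where "q = (norm (\<theta> - c))\<^sup>2"
          define p where "p = (\<theta> - c) \<bullet> (c - x)"
          have "dist (c + s *\<^sub>R (x - c)) \<theta> = norm ((\<theta> - c) - s *\<^sub>R (x - c))"
            by (simp add: dist_norm norm_minus_commute algebra_simps)
          moreover have "(norm ((\<theta> - c) - s *\<^sub>R (x - c)))\<^sup>2 = q - 2 * s * ((\<theta> - c) \<bullet> (x - c)) + s\<^sup>2 * w\<^sup>2"
            using nsq_diff[of "\<theta> - c" "s *\<^sub>R (x - c)"] nsq_scale[of s "x - c"] q_def w_def
            by (simp only: inner_scaleR_right)
          moreover have "(\<theta> - c) \<bullet> (x - c) = - p" using p_def
            by (metis inner_minus_right minus_diff_eq)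
          ultimately have d: "(dist (c + s *\<^sub>R (x - c)) \<theta>)\<^sup>2 = q + 2 * s * p + s\<^sup>2 * w\<^sup>2"
            by simp
          have k: "R\<^sup>2 = q + 2 * p + w\<^sup>2" using key[OF th] q_def p_def by simp
          have "(1 - s) * q \<le> (1 - s) * F\<^sup>2" using qF[OF th] s0' q_def by (intro mult_left_mono) auto
          moreover have "s * (s * w\<^sup>2) \<le> s * (D / 2)" using s0' by (intro mult_left_mono) auto
          ultimately have ineq: "(1 - s) * q + s * (s * w\<^sup>2) \<le> (1 - s) * F\<^sup>2 + s * (D / 2)" by linarith
          have "(dist (c + s *\<^sub>R (x - c)) \<theta>)\<^sup>2 = q + s * (2 * p) + s * (s * w\<^sup>2)"
            using d by (simp add: power2_eq_square algebra_simps)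
          also have "\<dots> = q + s * (R\<^sup>2 - q - w\<^sup>2) + s * (s * w\<^sup>2)" using k by simp
          also have "\<dots> = (1 - s) * q + s * (s * w\<^sup>2) + s * (R\<^sup>2 - w\<^sup>2)" by (simp add: algebra_simps)
          also have "\<dots> \<le> (1 - s) * F\<^sup>2 + s * (D / 2) + s * (R\<^sup>2 - w\<^sup>2)" using ineq by linarith
          also have "\<dots> = F\<^sup>2 - s * D / 2" by (simp add: D_def algebra_simps)
          finally show "(dist (c + s *\<^sub>R (x - c)) \<theta>)\<^sup>2 \<le> F\<^sup>2 - s * D / 2" .
        qed
        moreover have "F\<^sup>2 - s * D / 2 < F\<^sup>2" using s0' D0 by simp
        ultimately show False using enc_no_smaller[OF S] F_def by blast
      next
        case False
        define D where "D = R\<^sup>2 - w\<^sup>2 - F\<^sup>2"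
        have D0: "D > 0" using False ne D_def by simp
        define s where "s = D / (2 * w\<^sup>2)"
        have s0': "s > 0" "s * w\<^sup>2 = D / 2" using D0 w0 s_def by (auto intro: divide_pos_pos)
        have "\<forall>\<theta>\<in>S. (dist (c - s *\<^sub>R (x - c)) \<theta>)\<^sup>2 \<le> F\<^sup>2 - s * D / 2"
        proof
          fix \<theta> assume th: "\<theta> \<in> S"
          define q where "q = (norm (\<theta> - c))\<^sup>2"
          define p where "p = (\<theta> - c) \<bullet> (c - x)"
          have "dist (c - s *\<^sub>R (x - c)) \<theta> = norm ((\<theta> - c) + s *\<^sub>R (x - c))"
            by (simp add: dist_norm norm_minus_commute algebra_simps)
          moreover have "(norm ((\<theta> - c) + s *\<^sub>R (x - c)))\<^sup>2 = q + 2 * s * ((\<theta> - c) \<bullet> (x - c)) + s\<^sup>2 * w\<^sup>2"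
            using nsq_add[of "\<theta> - c" "s *\<^sub>R (x - c)"] nsq_scale[of s "x - c"] q_def w_def
            by (simp only: inner_scaleR_right)
          moreover have "(\<theta> - c) \<bullet> (x - c) = - p" using p_def
            by (metis inner_minus_right minus_diff_eq)
          ultimately have d: "(dist (c - s *\<^sub>R (x - c)) \<theta>)\<^sup>2 = q - 2 * s * p + s\<^sup>2 * w\<^sup>2"
            by simp
          have k: "R\<^sup>2 = q + 2 * p + w\<^sup>2" using key[OF th] q_def p_def by simp
          have "(1 + s) * q \<le> (1 + s) * F\<^sup>2" using qF[OF th] s0' q_def by (intro mult_left_mono) auto
          moreover have "s * (s * w\<^sup>2) = s * (D / 2)" using s0' by simp
          ultimately have ineq: "(1 + s) * q + s * (s * w\<^sup>2) \<le> (1 + s) * F\<^sup>2 + s * (D / 2)" by linarith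
          have "(dist (c - s *\<^sub>R (x - c)) \<theta>)\<^sup>2 = q - s * (2 * p) + s * (s * w\<^sup>2)"
            using d by (simp add: power2_eq_square algebra_simps)
          also have "\<dots> = q - s * (R\<^sup>2 - q - w\<^sup>2) + s * (s * w\<^sup>2)" using k by simp
          also have "\<dots> = (1 + s) * q + s * (s * w\<^sup>2) - s * (R\<^sup>2 - w\<^sup>2)" by (simp add: algebra_simps)
          also have "\<dots> \<le> (1 + s) * F\<^sup>2 + s * (D / 2) - s * (R\<^sup>2 - w\<^sup>2)" using ineq by linarith
          also have "\<dots> = F\<^sup>2 - s * D / 2" by (simp add: D_def algebra_simps)
          finally show "(dist (c - s *\<^sub>R (x - c)) \<theta>)\<^sup>2 \<le> F\<^sup>2 - s * D / 2" .
        qed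
        moreover have "F\<^sup>2 - s * D / 2 < F\<^sup>2" using s0' D0 by simp
        ultimately show False using enc_no_smaller[OF S] F_def by blast
      qed
    qed
  qed
  then show ?thesis using F_def w_def c_def by simp
qed


definition cK :: "'a::euclidean_space set \<Rightarrow> 'a \<Rightarrow> 'a" where
  "cK K x = enc_center (Theta K x)"

lemma point_facts:
  fixes K :: "'a::euclidean_space set"
  assumes "closed K" "K \<noteq> {}" "x \<notin> K"
  shows "(FK K x)\<^sup>2 = (distK K x)\<^sup>2 - (norm (x - cK K x))\<^sup>2"
    and "\<And>\<theta>. \<theta> \<in> Theta K x \<Longrightarrow> (x - cK K x) \<bullet> (x - \<theta>) \<ge> (norm (x - cK K x))\<^sup>2"
    and "cK K x \<in> convex hull (Theta K x)"
    and "FK K x \<ge> 0"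
    and "\<And>\<theta>. \<theta> \<in> Theta K x \<Longrightarrow> dist (cK K x) \<theta> \<le> FK K x"
proof -
  note tb = Theta_basic[OF assms]
  have sph: "\<forall>\<theta>\<in>Theta K x. dist x \<theta> = distK K x" using tb(4) by auto
  show pyth: "(FK K x)\<^sup>2 = (distK K x)\<^sup>2 - (norm (x - cK K x))\<^sup>2"
    using enc_pyth[OF tb(3) tb(2) sph] unfolding FK_def cK_def .
  show "cK K x \<in> convex hull (Theta K x)" unfolding cK_def by (rule enc_center_hull[OF tb(3) tb(2)])
  show "FK K x \<ge> 0" unfolding FK_def by (rule enc_nonneg[OF tb(3) tb(2)])
  show inb: "\<And>\<theta>. \<theta> \<in> Theta K x \<Longrightarrow> dist (cK K x) \<theta> \<le> FK K x"
    using enc_attained[OF tb(3) tb(2)] unfolding FK_def cK_def by auto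
  fix \<theta> assume th: "\<theta> \<in> Theta K x"
  define c where "c = cK K x"
  define w where "w = norm (x - c)"
  define q where "q = (norm (\<theta> - c))\<^sup>2"
  have "distK K x = norm ((\<theta> - c) + (c - x))" using sph th by (auto simp: dist_norm norm_minus_commute)
  then have k: "(distK K x)\<^sup>2 = q + 2 * ((\<theta> - c) \<bullet> (c - x)) + w\<^sup>2"
    using nsq_add[of "\<theta> - c" "c - x"] w_def q_def by (simp add: norm_minus_commute)
  have "q \<le> (FK K x)\<^sup>2" using inb[OF th] q_def c_def
    by (simp add: dist_norm norm_minus_commute power_mono)
  then have p0: "(\<theta> - c) \<bullet> (c - x) \<ge> 0" using k pyth c_def w_def by simp
  have "(x - c) \<bullet> (x - \<theta>) = (x - c) \<bullet> ((x - c) + (c - \<theta>))" by simp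
  also have "\<dots> = w\<^sup>2 + (\<theta> - c) \<bullet> (c - x)" unfolding inner_add_right w_def
    by (simp add: power2_norm_eq_inner inner_commute) (metis inner_minus_left inner_minus_right minus_diff_eq)
  finally show "(x - cK K x) \<bullet> (x - \<theta>) \<ge> (norm (x - cK K x))\<^sup>2" using p0 c_def w_def by simp
qed

lemma cK_monotone:
  fixes K :: "'a::euclidean_space set"
  assumes "closed K" "K \<noteq> {}" "x \<notin> K" "y \<notin> K"
  shows "(cK K x - cK K y) \<bullet> (x - y) \<ge> 0"
proof -
  have pair: "(tx - ty) \<bullet> (x - y) \<ge> 0" if tx: "tx \<in> Theta K x" and ty: "ty \<in> Theta K y" for tx ty
  proof -
    have "dist x tx \<le> dist x ty" using Theta_basic(4)[OF assms(1,2,3) tx] Theta_basic(4)[OF assms(1,2,4) ty]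
      infdist_le[of ty K x] unfolding distK_def by auto
    then have a: "(norm (x - tx))\<^sup>2 \<le> (norm (x - ty))\<^sup>2" by (simp add: dist_norm power_mono)
    have "dist y ty \<le> dist y tx" using Theta_basic(4)[OF assms(1,2,3) tx] Theta_basic(4)[OF assms(1,2,4) ty]
      infdist_le[of tx K y] unfolding distK_def by auto
    then have b: "(norm (y - ty))\<^sup>2 \<le> (norm (y - tx))\<^sup>2" by (simp add: dist_norm power_mono)
    have "(tx - ty) \<bullet> (x - y) = tx \<bullet> x - tx \<bullet> y - ty \<bullet> x + ty \<bullet> y"
      by (simp add: inner_diff_left inner_diff_right)
    moreover note a b nsq_diff[of x tx] nsq_diff[of x ty] nsq_diff[of y tx] nsq_diff[of y ty]
    ultimately show ?thesis by (simp add: inner_commute)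
  qed
  define H1 where "H1 = (\<Inter>tx\<in>Theta K x. {p. (x - y) \<bullet> p \<le> (x - y) \<bullet> tx})"
  have "convex H1" unfolding H1_def by (intro convex_INT convex_halfspace_le)
  moreover have "Theta K y \<subseteq> H1" unfolding H1_def using pair by (force simp: inner_diff_left inner_commute)
  ultimately have "convex hull (Theta K y) \<subseteq> H1" by (intro hull_minimal)
  then have cy: "cK K y \<in> H1" using point_facts(3)[OF assms(1,2,4)] by auto
  define H2 where "H2 = {p. (x - y) \<bullet> p \<ge> (x - y) \<bullet> cK K y}"
  have "convex H2" unfolding H2_def by (rule convex_halfspace_ge)
  moreover have "Theta K x \<subseteq> H2" unfolding H2_def using cy H1_def by auto
  ultimately have "convex hull (Theta K x) \<subseteq> H2" by (intro hull_minimal)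
  then have "cK K x \<in> H2" using point_facts(3)[OF assms(1,2,3)] by auto
  then show ?thesis unfolding H2_def by (simp add: inner_diff_left inner_diff_right inner_commute)
qed


lemma Theta_usc:
  fixes K :: "'a::euclidean_space set"
  assumes K: "closed K" "K \<noteq> {}" "x \<notin> K" and e: "\<epsilon> > 0"
  shows "\<exists>\<delta>>0. \<forall>z \<theta>. dist z x < \<delta> \<longrightarrow> \<theta> \<in> Theta K z \<longrightarrow> (\<exists>\<theta>'\<in>Theta K x. dist \<theta> \<theta>' < \<epsilon>)"
proof -
  define R where "R = distK K x"
  note tb = Theta_basic[OF K]
  define C where "C = (K \<inter> cball x (R + 1)) \<inter> {\<theta>. \<epsilon> \<le> infdist \<theta> (Theta K x)}"
  have "closed {\<theta>. \<epsilon> \<le> infdist \<theta> (Theta K x)}"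
    by (intro closed_Collect_le continuous_intros continuous_on_id)
  then have cC: "compact C" unfolding C_def
    by (intro compact_Int_closed closed_Int_compact K(1) compact_cball)
  have near: "\<exists>\<theta>'\<in>Theta K x. dist \<theta> \<theta>' < \<epsilon>" if "infdist \<theta> (Theta K x) < \<epsilon>" for \<theta>
  proof -
    obtain \<theta>' where "\<theta>' \<in> Theta K x" "infdist \<theta> (Theta K x) = dist \<theta> \<theta>'"
      using infdist_attains_inf[OF compact_imp_closed[OF tb(3)] tb(2)] by metis
    then show ?thesis using that by auto
  qed
  have bound: "dist x \<theta> \<le> R + 2 * dist z x" if "\<theta> \<in> Theta K z" for z \<theta>
  proof -
    have "dist z \<theta> = infdist z K" using that unfolding Theta_def distK_def by auto
    also have "\<dots> \<le> infdist x K + dist z x" by (rule infdist_triangle)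
    finally have "dist z \<theta> \<le> R + dist z x" unfolding R_def distK_def .
    moreover have "dist x \<theta> \<le> dist x z + dist z \<theta>" by (rule dist_triangle)
    ultimately show ?thesis by (simp add: dist_commute)
  qed
  have inK: "\<theta> \<in> K" if "\<theta> \<in> Theta K z" for z \<theta> using that unfolding Theta_def by auto
  show ?thesis
  proof (cases "C = {}")
    case True
    show ?thesis
    proof (intro exI[of _ "1/4"] conjI allI impI)
      fix z \<theta> assume z: "dist z x < 1/4" and th: "\<theta> \<in> Theta K z"
      have "dist x \<theta> \<le> R + 1" using bound[OF th] z by linarith
      then have "\<theta> \<notin> {\<theta>. \<epsilon> \<le> infdist \<theta> (Theta K x)}" using True inK[OF th] unfolding C_def by auto
      then show "\<exists>\<theta>'\<in>Theta K x. dist \<theta> \<theta>' < \<epsilon>" using near by auto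
    qed simp
  next
    case False
    have "continuous_on C (\<lambda>\<theta>. dist x \<theta>)" by (intro continuous_intros)
    then obtain \<theta>0 where t0: "\<theta>0 \<in> C" and t0min: "\<forall>\<theta>\<in>C. dist x \<theta>0 \<le> dist x \<theta>"
      using continuous_attains_inf[OF cC False] by blast
    have "\<theta>0 \<in> K" using t0 C_def by auto
    then have ge: "dist x \<theta>0 \<ge> R" unfolding R_def distK_def by (rule infdist_le)
    have "dist x \<theta>0 \<noteq> R"
    proof
      assume "dist x \<theta>0 = R"
      then have "\<theta>0 \<in> Theta K x" using \<open>\<theta>0 \<in> K\<close> unfolding Theta_def R_def by auto
      then have "infdist \<theta>0 (Theta K x) = 0" by (simp add: infdist_zero)
      then show False using t0 e unfolding C_def by auto
    qed
    with ge have gt: "dist x \<theta>0 > R" by simp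
    define \<eta> where "\<eta> = dist x \<theta>0 - R"
    have eta: "\<eta> > 0" using gt \<eta>_def by simp
    show ?thesis
    proof (intro exI[of _ "min (1/4) (\<eta>/4)"] conjI allI impI)
      fix z \<theta> assume z: "dist z x < min (1/4) (\<eta>/4)" and th: "\<theta> \<in> Theta K z"
      have d1: "dist x \<theta> \<le> R + 1" using bound[OF th] z by linarith
      have "dist z x < \<eta>/4" using z by simp
      then have d2: "dist x \<theta> < R + \<eta>" using bound[OF th] eta by linarith
      show "\<exists>\<theta>'\<in>Theta K x. dist \<theta> \<theta>' < \<epsilon>"
      proof (rule ccontr)
        assume "\<not> ?thesis"
        then have "\<not> infdist \<theta> (Theta K x) < \<epsilon>" using near by blast
        then have "\<theta> \<in> C" using d1 inK[OF th] unfolding C_def by auto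
        then show False using t0min d2 \<eta>_def by force
      qed
    qed (use eta in simp)
  qed
qed

lemma FK_usc:
  fixes K :: "'a::euclidean_space set"
  assumes K: "closed K" "K \<noteq> {}" "x \<notin> K" and e: "\<epsilon> > 0"
  shows "\<exists>\<delta>>0. \<forall>z. z \<notin> K \<longrightarrow> dist z x < \<delta> \<longrightarrow> FK K z \<le> FK K x + \<epsilon>"
proof -
  obtain \<delta> where d: "\<delta> > 0" and dd: "\<forall>z \<theta>. dist z x < \<delta> \<longrightarrow> \<theta> \<in> Theta K z \<longrightarrow> (\<exists>\<theta>'\<in>Theta K x. dist \<theta> \<theta>' < \<epsilon>)"
    using Theta_usc[OF K e] by blast
  show ?thesis
  proof (intro exI[of _ \<delta>] conjI allI impI d)
    fix z assume z: "z \<notin> K" "dist z x < \<delta>"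
    have "Theta K z \<subseteq> cball (cK K x) (FK K x + \<epsilon>)"
    proof
      fix \<theta> assume th: "\<theta> \<in> Theta K z"
      then obtain \<theta>' where t': "\<theta>' \<in> Theta K x" "dist \<theta> \<theta>' < \<epsilon>" using dd z by blast
      have "dist (cK K x) \<theta>' \<le> FK K x" by (rule point_facts(5)[OF K t'(1)])
      moreover have "dist (cK K x) \<theta> \<le> dist (cK K x) \<theta>' + dist \<theta>' \<theta>" by (rule dist_triangle)
      ultimately show "\<theta> \<in> cball (cK K x) (FK K x + \<epsilon>)" using t'(2) by (simp add: dist_commute)
    qed
    then show "FK K z \<le> FK K x + \<epsilon>" unfolding FK_def
      by (rule enc_lower[OF Theta_basic(2)[OF K(1,2) z(1)]])
  qed
qed

lemma rderiv_approx:
  fixes \<gamma> :: "real \<Rightarrow> 'a::real_normed_vector"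
  assumes "(\<gamma> has_vector_derivative v) (at s within {s..})" "e > 0"
  shows "\<exists>d>0. \<forall>h. 0 < h \<and> h < d \<longrightarrow> norm (\<gamma> (s + h) - \<gamma> s - h *\<^sub>R v) \<le> e * h"
proof -
  have "(\<gamma> has_derivative (\<lambda>h. h *\<^sub>R v)) (at s within {s..})"
    using assms(1) by (simp add: has_vector_derivative_def)
  then obtain d where d: "d > 0" "\<forall>y\<in>{s..}. norm (y - s) < d \<longrightarrow> norm (\<gamma> y - \<gamma> s - (y - s) *\<^sub>R v) \<le> e * norm (y - s)"
    using assms(2) unfolding has_derivative_within_alt by blast
  show ?thesis
  proof (intro exI[of _ d] conjI allI impI d(1))
    fix h :: real assume h: "0 < h \<and> h < d"
    then have "s + h \<in> {s..}" "norm (s + h - s) < d" by auto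
    then have "norm (\<gamma> (s + h) - \<gamma> s - (s + h - s) *\<^sub>R v) \<le> e * norm (s + h - s)" using d(2) by blast
    then show "norm (\<gamma> (s + h) - \<gamma> s - h *\<^sub>R v) \<le> e * h" using h by simp
  qed
qed


lemma rcont_eps:
  fixes f :: "real \<Rightarrow> 'b::metric_space"
  assumes "continuous (at s within {s..}) f" "\<epsilon> > 0"
  shows "\<exists>d>0. \<forall>h. 0 \<le> h \<and> h < d \<longrightarrow> dist (f (s + h)) (f s) < \<epsilon>"
proof -
  obtain d where d: "d > 0" "\<forall>x'\<in>{s..}. dist x' s < d \<longrightarrow> dist (f x') (f s) < \<epsilon>"
    using assms unfolding continuous_within_eps_delta by blast
  show ?thesis
  proof (intro exI[of _ d] conjI allI impI d(1))
    fix h :: real assume h: "0 \<le> h \<and> h < d"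
    then have "s + h \<in> {s..}" "dist (s + h) s < d" by (auto simp: dist_real_def)
    then show "dist (f (s + h)) (f s) < \<epsilon>" using d(2) by blast
  qed
qed

lemma R2_dini:
  fixes K :: "'a::euclidean_space set" and \<gamma> :: "real \<Rightarrow> 'a"
  assumes K: "closed K" "K \<noteq> {}" "\<gamma> s \<notin> K"
    and der: "(\<gamma> has_vector_derivative v) (at s within {s..})"
    and m: "\<forall>\<theta>\<in>Theta K (\<gamma> s). v \<bullet> (\<gamma> s - \<theta>) \<ge> m"
    and e: "e > 0"
  shows "\<exists>d>0. \<forall>h. 0 < h \<and> h < d \<longrightarrow> (distK K (\<gamma> (s + h)))\<^sup>2 \<ge> (distK K (\<gamma> s))\<^sup>2 + 2 * h * m - e * h"
proof -
  define x where "x = \<gamma> s"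
  define R where "R = distK K x"
  have R0: "R > 0" using Theta_basic(1)[OF K] x_def R_def by simp
  define nv where "nv = norm v"
  define \<epsilon>1 where "\<epsilon>1 = e / (4 * (nv + 1))"
  define \<epsilon>2 where "\<epsilon>2 = e / (4 * (R + 2))"
  have nv0: "nv \<ge> 0" using nv_def by simp
  have e1: "\<epsilon>1 > 0" "2 * nv * \<epsilon>1 \<le> e / 2"
  proof -
    show "\<epsilon>1 > 0" using e nv0 unfolding \<epsilon>1_def by (intro divide_pos_pos) auto
    have "2 * nv * \<epsilon>1 = (e / 2) * (nv / (nv + 1))" using nv0 unfolding \<epsilon>1_def by (simp add: field_simps)
    also have "\<dots> \<le> (e / 2) * 1" using e nv0 by (intro mult_left_mono) auto
    finally show "2 * nv * \<epsilon>1 \<le> e / 2" by simp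
  qed
  have e2: "\<epsilon>2 > 0" "2 * \<epsilon>2 * (R + 2) = e / 2" using e R0 unfolding \<epsilon>2_def by (auto simp: field_simps)
  obtain \<delta> where dl: "\<delta> > 0" and dlu: "\<forall>z \<theta>. dist z x < \<delta> \<longrightarrow> \<theta> \<in> Theta K z \<longrightarrow> (\<exists>\<theta>'\<in>Theta K x. dist \<theta> \<theta>' < \<epsilon>1)"
    using Theta_usc[OF K(1,2) K(3)[folded x_def] e1(1)] by blast
  obtain d1 where d1: "d1 > 0" "\<forall>h. 0 < h \<and> h < d1 \<longrightarrow> norm (\<gamma> (s + h) - \<gamma> s - h *\<^sub>R v) \<le> \<epsilon>2 * h"
    using rderiv_approx[OF der e2(1)] by blast
  have "min \<delta> (min 1 (R/2)) > 0" using dl R0 by simp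
  then obtain d2 where d2: "d2 > 0" "\<forall>h. 0 \<le> h \<and> h < d2 \<longrightarrow> dist (\<gamma> (s + h)) (\<gamma> s) < min \<delta> (min 1 (R/2))"
    using rcont_eps[OF has_vector_derivative_continuous[OF der]] by blast
  show ?thesis
  proof (intro exI[of _ "min d1 d2"] conjI allI impI)
    show "min d1 d2 > 0" using d1 d2 by simp
    fix h :: real assume h: "0 < h \<and> h < min d1 d2"
    define z where "z = \<gamma> (s + h)"
    have dz: "dist z x < \<delta>" "dist z x < 1" "dist z x < R/2" using d2(2) h z_def x_def by auto
    have apx: "norm (z - x - h *\<^sub>R v) \<le> \<epsilon>2 * h" using d1(2) h z_def x_def by auto
    have "R \<le> infdist z K + dist x z" using infdist_triangle[of x K z] unfolding R_def distK_def by simp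
    then have "infdist z K > 0" using dz zero_le_dist[of x z] dist_commute[of x z] by linarith
    then have zK: "z \<notin> K" by (auto simp: infdist_zero)
    obtain \<theta> where th: "\<theta> \<in> Theta K z" using Theta_basic(2)[OF K(1,2) zK] by blast
    have thK: "\<theta> \<in> K" and Rz: "distK K z = dist z \<theta>" using th unfolding Theta_def by auto
    obtain \<theta>' where t': "\<theta>' \<in> Theta K x" "dist \<theta> \<theta>' < \<epsilon>1" using dlu dz th by blast
    have xt: "dist x \<theta> \<ge> R" using infdist_le[OF thK, of x] unfolding R_def distK_def by simp
    have xt2: "dist x \<theta> \<le> R + 2" 
    proof -
      have "dist z \<theta> = infdist z K" using Rz unfolding distK_def by simp
      also have "\<dots> \<le> infdist x K + dist z x" by (rule infdist_triangle)
      finally have "dist x \<theta> \<le> R + 2 * dist z x" using dist_triangle[of x \<theta> z] unfolding R_def distK_def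
        by (simp add: dist_commute)
      then show ?thesis using dz by linarith
    qed
    have "v \<bullet> (x - \<theta>') \<ge> m" using m t'(1) x_def by auto
    moreover have "\<bar>v \<bullet> (\<theta>' - \<theta>)\<bar> \<le> nv * \<epsilon>1"
    proof -
      have "\<bar>v \<bullet> (\<theta>' - \<theta>)\<bar> \<le> norm v * norm (\<theta>' - \<theta>)" by (rule Cauchy_Schwarz_ineq2)
      also have "\<dots> \<le> nv * \<epsilon>1" unfolding nv_def using t'(2) by (intro mult_left_mono) (auto simp: dist_norm norm_minus_commute)
      finally show ?thesis .
    qed
    moreover have "v \<bullet> (x - \<theta>) = v \<bullet> (x - \<theta>') + v \<bullet> (\<theta>' - \<theta>)" by (simp add: inner_diff_right)
    ultimately have vt: "v \<bullet> (x - \<theta>) \<ge> m - nv * \<epsilon>1" by linarith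
    have "\<bar>(z - x - h *\<^sub>R v) \<bullet> (x - \<theta>)\<bar> \<le> norm (z - x - h *\<^sub>R v) * norm (x - \<theta>)" by (rule Cauchy_Schwarz_ineq2)
    also have "\<dots> \<le> (\<epsilon>2 * h) * (R + 2)" using apx xt2 e2(1) h by (intro mult_mono) (auto simp: dist_norm)
    finally have err: "\<bar>(z - x - h *\<^sub>R v) \<bullet> (x - \<theta>)\<bar> \<le> \<epsilon>2 * h * (R + 2)" .
    have split: "(z - x) \<bullet> (x - \<theta>) = h * (v \<bullet> (x - \<theta>)) + (z - x - h *\<^sub>R v) \<bullet> (x - \<theta>)"
      by (simp add: inner_diff_left)
    have hv: "h * (v \<bullet> (x - \<theta>)) \<ge> h * (m - nv * \<epsilon>1)" using vt h by (intro mult_left_mono) auto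
    have "(distK K z)\<^sup>2 = (norm ((z - x) + (x - \<theta>)))\<^sup>2" using Rz by (simp add: dist_norm)
    also have "\<dots> = (norm (z - x))\<^sup>2 + 2 * ((z - x) \<bullet> (x - \<theta>)) + (norm (x - \<theta>))\<^sup>2" by (rule nsq_add)
    finally have eq: "(distK K z)\<^sup>2 = (norm (z - x))\<^sup>2 + 2 * ((z - x) \<bullet> (x - \<theta>)) + (norm (x - \<theta>))\<^sup>2" .
    have "(norm (x - \<theta>))\<^sup>2 \<ge> R\<^sup>2" using xt R0 by (simp add: dist_norm power_mono)
    moreover have "h * (nv * \<epsilon>1) \<le> h * (e / 4)" using e1 h by (intro mult_left_mono) auto
    moreover have "\<epsilon>2 * h * (R + 2) = h * (e / 4)"
    proof -
      have "\<epsilon>2 * h * (R + 2) = h * (2 * \<epsilon>2 * (R + 2)) / 2" by simp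
      then show ?thesis using e2(2) by simp
    qed
    moreover have "h * (m - nv * \<epsilon>1) = h * m - h * (nv * \<epsilon>1)" by (simp add: right_diff_distrib)
    moreover have "(norm (z - x))\<^sup>2 \<ge> 0" by simp
    moreover have "2 * h * m = 2 * (h * m)" by simp
    moreover have "- ((z - x - h *\<^sub>R v) \<bullet> (x - \<theta>)) \<le> \<epsilon>2 * h * (R + 2)" using err by (rule abs_le_D2)
    moreover have "e * h = 4 * (h * (e / 4))" by simp
    ultimately have "(distK K z)\<^sup>2 \<ge> R\<^sup>2 + 2 * h * m - e * h"
      using eq split err hv by linarith
    then show "(distK K (\<gamma> (s + h)))\<^sup>2 \<ge> (distK K (\<gamma> s))\<^sup>2 + 2 * h * m - e * h"
      using z_def x_def R_def by simp
  qed
qed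


lemma dini_mono_aux:
  fixes \<phi> :: "real \<Rightarrow> real"
  assumes ab: "a \<le> b" and e: "e > 0"
    and D: "\<forall>s\<in>{a..<b}. \<forall>\<epsilon>>0. \<exists>d>0. \<forall>h. 0 < h \<and> h < d \<longrightarrow> \<phi> (s + h) \<ge> \<phi> s - \<epsilon> * h"
    and U: "\<forall>s\<in>{a<..b}. \<forall>\<epsilon>>0. \<exists>d>0. \<forall>r. s - d < r \<and> r < s \<longrightarrow> \<phi> r \<le> \<phi> s + \<epsilon>"
  shows "\<phi> a \<le> \<phi> b + e * (b - a)"
proof -
  define \<psi> where "\<psi> s = \<phi> s + e * (s - a)" for s
  define S where "S = {s \<in> {a..b}. \<forall>r\<in>{a..s}. \<psi> r \<ge> \<psi> a}"
  have aS: "a \<in> S" using ab unfolding S_def by auto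
  have bdd: "bdd_above S" unfolding S_def by (auto intro: bdd_aboveI[of _ b])
  define t where "t = Sup S"
  have at: "a \<le> t" using aS bdd t_def by (simp add: cSup_upper)
  have tb: "t \<le> b" using aS unfolding t_def S_def by (intro cSup_least) auto
  have below: "\<psi> r \<ge> \<psi> a" if r1: "a \<le> r" and r2: "r < t" for r
  proof -
    obtain s where "s \<in> S" "r < s" using less_cSupD[of S r] aS r2 t_def by blast
    then show ?thesis using r1 unfolding S_def by auto
  qed
  have at_t: "\<psi> t \<ge> \<psi> a"
  proof (cases "t = a")
    case True then show ?thesis by simp
  next
    case False
    with at have at': "a < t" by simp
    show ?thesis
    proof (rule ccontr)
      assume "\<not> ?thesis"
      then have lt: "\<psi> t < \<psi> a" by simp
      define \<epsilon> where "\<epsilon> = (\<psi> a - \<psi> t) / 2"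
      have eps: "\<epsilon> > 0" using lt \<epsilon>_def by simp
      have tin: "t \<in> {a<..b}" using at' tb by simp
      have "\<exists>d>0. \<forall>r. t - d < r \<and> r < t \<longrightarrow> \<phi> r \<le> \<phi> t + \<epsilon>"
        using U tin eps by blast
      then obtain d where d: "d > 0" "\<forall>r. t - d < r \<and> r < t \<longrightarrow> \<phi> r \<le> \<phi> t + \<epsilon>"
        by blast
      define r where "r = max (t - d/2) ((a + t)/2)"
      have m1: "a < (a + t) / 2" "(a + t) / 2 < t" using at' by (simp_all add: field_simps)
      have m2: "t - d < t - d / 2" "t - d / 2 < t" using d(1) by (simp_all add: field_simps)
      have r: "t - d < r" "r < t" "a \<le> r" unfolding r_def using m1 m2 by (auto simp: max_def)
      have "\<phi> r \<le> \<phi> t + \<epsilon>" using d(2) r by blast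
      moreover have "e * (r - a) \<le> e * (t - a)" using e r by (intro mult_left_mono) auto
      ultimately have "\<psi> r \<le> \<psi> t + \<epsilon>" unfolding \<psi>_def by linarith
      moreover have "\<psi> r \<ge> \<psi> a" using below r by blast
      moreover have "2 * \<epsilon> = \<psi> a - \<psi> t" using \<epsilon>_def by simp
      ultimately show False using lt by linarith
    qed
  qed
  have tS: "t \<in> S"
  proof -
    have "\<forall>r\<in>{a..t}. \<psi> r \<ge> \<psi> a"
    proof
      fix r assume "r \<in> {a..t}"
      then have "a \<le> r" "r < t \<or> r = t" by auto
      then show "\<psi> r \<ge> \<psi> a" using below at_t by blast
    qed
    then show ?thesis unfolding S_def using at tb by auto
  qed
  have "t = b"
  proof (rule ccontr)
    assume "t \<noteq> b"
    with tb have tb': "t < b" by simp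
    have "e / 2 > 0" using e by simp
    have tin: "t \<in> {a..<b}" using at tb' by simp
    have "\<exists>d>0. \<forall>h. 0 < h \<and> h < d \<longrightarrow> \<phi> (t + h) \<ge> \<phi> t - (e/2) * h"
      using D tin \<open>e/2 > 0\<close> by blast
    then obtain d where d: "d > 0" "\<forall>h. 0 < h \<and> h < d \<longrightarrow> \<phi> (t + h) \<ge> \<phi> t - (e/2) * h"
      by blast
    define h0 where "h0 = min (d/2) (b - t)"
    have h0: "h0 > 0" "h0 < d" "t + h0 \<le> b" using d(1) tb' h0_def by auto
    have "t + h0 \<in> S" unfolding S_def
    proof (intro CollectI conjI ballI)
      show "t + h0 \<in> {a..b}" using at h0 by auto
      fix r assume r: "r \<in> {a..t + h0}"
      show "\<psi> a \<le> \<psi> r"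
      proof (cases "r \<le> t")
        case True then show ?thesis using tS r unfolding S_def by auto
      next
        case False
        define h where "h = r - t"
        have h: "0 < h" "h < d" using False r h0 h_def by auto
        then have "\<phi> (t + h) \<ge> \<phi> t - (e/2) * h" using d(2) by blast
        moreover have "e * h > 0" using e h by simp
        ultimately have "\<psi> (t + h) \<ge> \<psi> t" unfolding \<psi>_def by (simp add: algebra_simps)
        then show ?thesis using at_t h_def by simp
      qed
    qed
    then have "t + h0 \<le> t" unfolding t_def using bdd by (rule cSup_upper)
    then show False using h0 by simp
  qed
  then show ?thesis using at_t unfolding \<psi>_def by simp
qed

lemma dini_mono:
  fixes \<phi> :: "real \<Rightarrow> real"
  assumes ab: "a \<le> b"
    and D: "\<forall>s\<in>{a..<b}. \<forall>\<epsilon>>0. \<exists>d>0. \<forall>h. 0 < h \<and> h < d \<longrightarrow> \<phi> (s + h) \<ge> \<phi> s - \<epsilon> * h"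
    and U: "\<forall>s\<in>{a<..b}. \<forall>\<epsilon>>0. \<exists>d>0. \<forall>r. s - d < r \<and> r < s \<longrightarrow> \<phi> r \<le> \<phi> s + \<epsilon>"
  shows "\<phi> a \<le> \<phi> b"
proof (cases "a = b")
  case True then show ?thesis by simp
next
  case False
  with ab have ab': "a < b" by simp
  show ?thesis
  proof (rule ccontr)
    assume "\<not> ?thesis"
    then have lt: "\<phi> b < \<phi> a" by simp
    define e where "e = (\<phi> a - \<phi> b) / (2 * (b - a))"
    have e: "e > 0" using lt ab' e_def by (simp add: divide_pos_pos)
    have "\<phi> a \<le> \<phi> b + e * (b - a)" by (rule dini_mono_aux[OF ab e D U])
    moreover have "2 * (e * (b - a)) = \<phi> a - \<phi> b" using ab' e_def by (simp add: field_simps)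
    ultimately show False using lt by linarith
  qed
qed


lemma cont_U:
  fixes \<phi> :: "real \<Rightarrow> real"
  assumes "continuous_on {a..b} \<phi>"
  shows "\<forall>s\<in>{a<..b}. \<forall>\<epsilon>>0. \<exists>d>0. \<forall>r. s - d < r \<and> r < s \<longrightarrow> \<phi> r \<le> \<phi> s + \<epsilon>"
proof (intro ballI allI impI)
  fix s \<epsilon> :: real assume s: "s \<in> {a<..b}" and e: "\<epsilon> > 0"
  then have "s \<in> {a..b}" by auto
  then obtain d where d: "d > 0" "\<forall>x'\<in>{a..b}. dist x' s < d \<longrightarrow> dist (\<phi> x') (\<phi> s) < \<epsilon>"
    using assms e unfolding continuous_on_iff by blast
  show "\<exists>d>0. \<forall>r. s - d < r \<and> r < s \<longrightarrow> \<phi> r \<le> \<phi> s + \<epsilon>"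
  proof (intro exI[of _ "min d (s - a)"] conjI allI impI)
    show "min d (s - a) > 0" using d s by auto
    fix r assume r: "s - min d (s - a) < r \<and> r < s"
    then have "r \<in> {a..b}" "dist r s < d" using s by (auto simp: dist_real_def)
    then have "dist (\<phi> r) (\<phi> s) < \<epsilon>" using d(2) by blast
    then show "\<phi> r \<le> \<phi> s + \<epsilon>" by (simp add: dist_real_def)
  qed
qed

lemma rderiv_dini:
  fixes \<phi> :: "real \<Rightarrow> real"
  assumes "(\<phi> has_real_derivative D) (at s within {s..})"
  shows "\<forall>\<epsilon>>0. \<exists>d>0. \<forall>h. 0 < h \<and> h < d \<longrightarrow> \<phi> (s + h) \<ge> \<phi> s + h * D - \<epsilon> * h"
proof (intro allI impI)
  fix \<epsilon> :: real assume e: "\<epsilon> > 0"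
  have "(\<phi> has_vector_derivative D) (at s within {s..})"
    using assms by (simp add: has_real_derivative_iff_has_vector_derivative)
  then obtain d where d: "d > 0" "\<forall>h. 0 < h \<and> h < d \<longrightarrow> norm (\<phi> (s + h) - \<phi> s - h *\<^sub>R D) \<le> \<epsilon> * h"
    using rderiv_approx e by blast
  show "\<exists>d>0. \<forall>h. 0 < h \<and> h < d \<longrightarrow> \<phi> (s + h) \<ge> \<phi> s + h * D - \<epsilon> * h"
  proof (intro exI[of _ d] conjI allI impI d(1))
    fix h assume "0 < h \<and> h < d"
    then have "\<bar>\<phi> (s + h) - \<phi> s - h * D\<bar> \<le> \<epsilon> * h" using d(2) by auto
    then show "\<phi> (s + h) \<ge> \<phi> s + h * D - \<epsilon> * h" by linarith
  qed
qed

lemma deriv_approx_at: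
  fixes k :: "real \<Rightarrow> real"
  assumes "(k has_real_derivative D) (at x)" "e > 0"
  shows "\<exists>d>0. \<forall>y. \<bar>y - x\<bar> < d \<longrightarrow> \<bar>k y - k x - D * (y - x)\<bar> \<le> e * \<bar>y - x\<bar>"
proof -
  have "(k has_derivative (*) D) (at x within UNIV)"
    using assms(1) by (simp add: has_field_derivative_def)
  then obtain d where "d > 0" "\<forall>y\<in>UNIV. norm (y - x) < d \<longrightarrow> norm (k y - k x - D * (y - x)) \<le> e * norm (y - x)"
    using assms(2) unfolding has_derivative_within_alt by blast
  then show ?thesis by auto
qed

lemma dini_chain:
  fixes f k :: "real \<Rightarrow> real"
  assumes fd: "\<forall>\<epsilon>>0. \<exists>d>0. \<forall>h. 0 < h \<and> h < d \<longrightarrow> f (s + h) \<ge> f s + h * A - \<epsilon> * h"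
    and km: "\<And>y1 y2. c0 \<le> y1 \<Longrightarrow> y1 \<le> y2 \<Longrightarrow> k y1 \<le> k y2"
    and c0: "c0 < f s"
    and kd: "(k has_real_derivative D) (at (f s))" and D0: "D \<ge> 0"
  shows "\<forall>\<epsilon>>0. \<exists>d>0. \<forall>h. 0 < h \<and> h < d \<longrightarrow> k (f (s + h)) \<ge> k (f s) + h * (D * A) - \<epsilon> * h"
proof (intro allI impI)
  fix \<epsilon> :: real assume e: "\<epsilon> > 0"
  define \<epsilon>1 where "\<epsilon>1 = \<epsilon> / (2 * (D + 1))"
  have e1: "\<epsilon>1 > 0" "D * \<epsilon>1 \<le> \<epsilon> / 2"
  proof -
    show "\<epsilon>1 > 0" using e D0 unfolding \<epsilon>1_def by (intro divide_pos_pos) auto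
    have "D * \<epsilon>1 = (\<epsilon> / 2) * (D / (D + 1))" using D0 unfolding \<epsilon>1_def by (simp add: field_simps)
    also have "\<dots> \<le> (\<epsilon> / 2) * 1" using e D0 by (intro mult_left_mono) auto
    finally show "D * \<epsilon>1 \<le> \<epsilon> / 2" by simp
  qed
  define \<epsilon>2 where "\<epsilon>2 = \<epsilon> / (2 * (\<bar>A\<bar> + \<epsilon>1 + 1))"
  have e2: "\<epsilon>2 > 0" "\<epsilon>2 * (\<bar>A\<bar> + \<epsilon>1) \<le> \<epsilon> / 2"
  proof -
    show "\<epsilon>2 > 0" using e e1 unfolding \<epsilon>2_def by (intro divide_pos_pos) auto
    have "\<epsilon>2 * (\<bar>A\<bar> + \<epsilon>1) = (\<epsilon> / 2) * ((\<bar>A\<bar> + \<epsilon>1) / (\<bar>A\<bar> + \<epsilon>1 + 1))" using e1 unfolding \<epsilon>2_def by (simp add: field_simps)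
    also have "\<dots> \<le> (\<epsilon> / 2) * 1" using e e1 by (intro mult_left_mono) auto
    finally show "\<epsilon>2 * (\<bar>A\<bar> + \<epsilon>1) \<le> \<epsilon> / 2" by simp
  qed
  obtain d1 where d1: "d1 > 0" "\<forall>h. 0 < h \<and> h < d1 \<longrightarrow> f (s + h) \<ge> f s + h * A - \<epsilon>1 * h"
    using fd e1 by blast
  obtain d2 where d2: "d2 > 0" "\<forall>y. \<bar>y - f s\<bar> < d2 \<longrightarrow> \<bar>k y - k (f s) - D * (y - f s)\<bar> \<le> \<epsilon>2 * \<bar>y - f s\<bar>"
    using deriv_approx_at[OF kd e2(1)] by blast
  define M where "M = \<bar>A\<bar> + \<epsilon>1 + 1"
  have M: "M > 0" using M_def e1 by simp
  define d where "d = min d1 (min (d2 / M) ((f s - c0) / M))"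
  show "\<exists>d>0. \<forall>h. 0 < h \<and> h < d \<longrightarrow> k (f (s + h)) \<ge> k (f s) + h * (D * A) - \<epsilon> * h"
  proof (intro exI[of _ d] conjI allI impI)
    show "d > 0" unfolding d_def using d1 d2 M c0 by (auto intro: divide_pos_pos)
    fix h assume h: "0 < h \<and> h < d"
    define y where "y = f s + h * A - \<epsilon>1 * h"
    have fy: "f (s + h) \<ge> y" using d1(2) h y_def unfolding d_def by auto
    have "\<bar>y - f s\<bar> \<le> h * (\<bar>A\<bar> + \<epsilon>1)"
    proof -
      have "\<bar>y - f s\<bar> = \<bar>h * A - \<epsilon>1 * h\<bar>" using y_def by simp
      also have "\<dots> \<le> \<bar>h * A\<bar> + \<bar>\<epsilon>1 * h\<bar>" by (rule abs_triangle_ineq4)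
      also have "\<dots> = h * (\<bar>A\<bar> + \<epsilon>1)" using h e1 by (simp add: abs_mult algebra_simps)
      finally show ?thesis .
    qed
    moreover have "h * (\<bar>A\<bar> + \<epsilon>1) < h * M" using h M_def by simp
    ultimately have yM: "\<bar>y - f s\<bar> < h * M" by linarith
    have "h * M < d2" "h * M \<le> f s - c0"
    proof -
      have "h < d2 / M" "h < (f s - c0) / M" using h unfolding d_def by auto
      then show "h * M < d2" "h * M \<le> f s - c0" using M by (auto simp: field_simps)
    qed
    then have yd: "\<bar>y - f s\<bar> < d2" and yc: "c0 \<le> y" using yM by linarith+
    have "k (f (s + h)) \<ge> k y" using km[OF yc fy] .
    moreover have "\<bar>k y - k (f s) - D * (y - f s)\<bar> \<le> \<epsilon>2 * \<bar>y - f s\<bar>" using d2(2) yd by blast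
    moreover have "\<epsilon>2 * \<bar>y - f s\<bar> \<le> \<epsilon>2 * (h * (\<bar>A\<bar> + \<epsilon>1))"
      using \<open>\<bar>y - f s\<bar> \<le> h * (\<bar>A\<bar> + \<epsilon>1)\<close> e2 by (intro mult_left_mono) auto
    moreover have "\<epsilon>2 * (h * (\<bar>A\<bar> + \<epsilon>1)) \<le> h * (\<epsilon> / 2)"
      using e2(2) h by (metis mult.left_commute mult_le_cancel_left_pos)
    moreover have "D * (y - f s) = h * (D * A) - h * (D * \<epsilon>1)" by (simp add: y_def algebra_simps)
    moreover have "h * (D * \<epsilon>1) \<le> h * (\<epsilon> / 2)" using e1 h by (intro mult_left_mono) auto
    moreover have "\<epsilon> * h = h * (\<epsilon> / 2) + h * (\<epsilon> / 2)" by (simp add: algebra_simps)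
    ultimately show "k (f (s + h)) \<ge> k (f s) + h * (D * A) - \<epsilon> * h"
      by (smt (verit))
  qed
qed


definition tflow :: "'a::euclidean_space set \<Rightarrow> (real \<Rightarrow> 'a) \<Rightarrow> bool" where
  "tflow K z \<longleftrightarrow> (\<forall>u\<ge>0. z u \<notin> K) \<and> continuous_on {0..} z \<and>
     (\<forall>u\<ge>0. (z has_vector_derivative (z u - cK K (z u))) (at u within {u..}))"

lemma nsq_rderiv:
  fixes f :: "real \<Rightarrow> 'a::real_inner"
  assumes "(f has_vector_derivative d) (at u within S)"
  shows "((\<lambda>u. (norm (f u))\<^sup>2) has_real_derivative 2 * (f u \<bullet> d)) (at u within S)"
proof -
  have fd: "(f has_derivative (\<lambda>h. h *\<^sub>R d)) (at u within S)" using assms by (simp add: has_vector_derivative_def)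
  have "((\<lambda>u. f u \<bullet> f u) has_derivative (\<lambda>h. f u \<bullet> (h *\<^sub>R d) + (h *\<^sub>R d) \<bullet> f u)) (at u within S)"
    by (rule has_derivative_inner[OF fd fd])
  moreover have "(\<lambda>h. f u \<bullet> (h *\<^sub>R d) + (h *\<^sub>R d) \<bullet> f u) = (*) (2 * (f u \<bullet> d))"
    by (auto simp: fun_eq_iff inner_commute algebra_simps)
  ultimately show ?thesis by (simp add: has_field_derivative_def power2_norm_eq_inner)
qed

lemma shift_rderiv:
  fixes f :: "real \<Rightarrow> 'a::real_normed_vector"
  assumes "(f has_vector_derivative d) (at (u + \<delta>) within {u + \<delta>..})"
  shows "((\<lambda>u. f (u + \<delta>)) has_vector_derivative d) (at u within {u..})"
proof -
  have s: "((\<lambda>u. u + \<delta>) has_vector_derivative 1) (at u within {u..})"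
    by (auto intro!: derivative_eq_intros)
  have "(\<lambda>u. u + \<delta>) ` {u..} \<subseteq> {u + \<delta>..}" by auto
  then have "(f has_vector_derivative d) (at (u + \<delta>) within (\<lambda>u. u + \<delta>) ` {u..})"
    using assms by (rule has_vector_derivative_within_subset[rotated])
  from vector_diff_chain_within[OF s this] show ?thesis by (simp add: o_def)
qed

lemma tflow_facts:
  fixes K :: "'a::euclidean_space set"
  assumes "tflow K z" "u \<ge> 0"
  shows "z u \<notin> K" "(z has_vector_derivative (z u - cK K (z u))) (at u within {u..})"
    "continuous_on {0..} z"
  using assms unfolding tflow_def by auto

lemma R_mono:
  fixes K :: "'a::euclidean_space set"
  assumes K: "closed K" "K \<noteq> {}" and z: "tflow K z" and u: "0 \<le> u1" "u1 \<le> u2"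
  shows "distK K (z u1) \<le> distK K (z u2)"
proof -
  define \<phi> where "\<phi> u = (distK K (z u))\<^sup>2" for u
  have "continuous_on {u1..u2} z" using tflow_facts(3)[OF z order_refl]
    by (rule continuous_on_subset) (use u in auto)
  then have "continuous_on {u1..u2} \<phi>" unfolding \<phi>_def distK_def by (intro continuous_intros)
  note U = cont_U[OF this]
  have D: "\<forall>s\<in>{u1..<u2}. \<forall>\<epsilon>>0. \<exists>d>0. \<forall>h. 0 < h \<and> h < d \<longrightarrow> \<phi> (s + h) \<ge> \<phi> s - \<epsilon> * h"
  proof (intro ballI allI impI)
    fix s \<epsilon> :: real assume s: "s \<in> {u1..<u2}" and e: "\<epsilon> > 0"
    then have s0: "s \<ge> 0" using u by auto
    note zs = tflow_facts[OF z s0]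
    have m: "\<forall>\<theta>\<in>Theta K (z s). (z s - cK K (z s)) \<bullet> (z s - \<theta>) \<ge> (norm (z s - cK K (z s)))\<^sup>2"
      using point_facts(2)[OF K zs(1)] by auto
    obtain d where d: "d > 0" "\<forall>h. 0 < h \<and> h < d \<longrightarrow> (distK K (z (s + h)))\<^sup>2 \<ge> (distK K (z s))\<^sup>2 + 2 * h * (norm (z s - cK K (z s)))\<^sup>2 - \<epsilon> * h"
      using R2_dini[OF K zs(1) zs(2) m e] by blast
    show "\<exists>d>0. \<forall>h. 0 < h \<and> h < d \<longrightarrow> \<phi> (s + h) \<ge> \<phi> s - \<epsilon> * h"
    proof (intro exI[of _ d] conjI allI impI d(1))
      fix h assume h: "0 < h \<and> h < d"
      have "2 * h * (norm (z s - cK K (z s)))\<^sup>2 \<ge> 0" using h by simp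
      then show "\<phi> (s + h) \<ge> \<phi> s - \<epsilon> * h" using d(2) h unfolding \<phi>_def by smt
    qed
  qed
  have "\<phi> u1 \<le> \<phi> u2" by (rule dini_mono[OF u(2) D U])
  moreover have "distK K (z u2) \<ge> 0" unfolding distK_def by (rule infdist_nonneg)
  ultimately show ?thesis unfolding \<phi>_def by (rule power2_le_imp_le)
qed


lemma tflow_cont_sub:
  fixes K :: "'a::euclidean_space set"
  assumes "tflow K z" "0 \<le> a"
  shows "continuous_on {a..b} z"
  using tflow_facts(3)[OF assms(1) order_refl] by (rule continuous_on_subset) (use assms(2) in auto)

lemma contraction:
  fixes K :: "'a::euclidean_space set"
  assumes K: "closed K" "K \<noteq> {}" and z: "tflow K z" and \<delta>: "\<delta> > 0" and u: "0 \<le> u1" "u1 \<le> u2"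
  shows "norm (z (u2 + \<delta>) - z u2) \<le> exp (u2 - u1) * norm (z (u1 + \<delta>) - z u1)"
proof -
  define E where "E u = (norm (z (u + \<delta>) - z u))\<^sup>2" for u
  define \<phi> where "\<phi> u = - (exp (-2 * u) * E u)" for u
  have "continuous_on {u1..u2} (\<lambda>u. z (u + \<delta>))"
  proof -
    have c1: "continuous_on {u1..u2} (\<lambda>u. u + \<delta>)" by (intro continuous_intros)
    have c2: "continuous_on ((\<lambda>u. u + \<delta>) ` {u1..u2}) z"
      using tflow_cont_sub[OF z, of "u1 + \<delta>" "u2 + \<delta>"] by (rule continuous_on_subset) (use u \<delta> in auto)
    from continuous_on_compose[OF c1 c2] show ?thesis by (simp add: o_def)
  qed
  moreover have "continuous_on {u1..u2} z" by (rule tflow_cont_sub[OF z u(1)])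
  ultimately have "continuous_on {u1..u2} \<phi>" unfolding \<phi>_def E_def by (intro continuous_intros)
  note U = cont_U[OF this]
  have D: "\<forall>s\<in>{u1..<u2}. \<forall>\<epsilon>>0. \<exists>d>0. \<forall>h. 0 < h \<and> h < d \<longrightarrow> \<phi> (s + h) \<ge> \<phi> s - \<epsilon> * h"
  proof (intro ballI)
    fix s assume s: "s \<in> {u1..<u2}"
    then have s0: "s \<ge> 0" "s + \<delta> \<ge> 0" using u \<delta> by auto
    define a where "a = z s"
    define b where "b = z (s + \<delta>)"
    define a' where "a' = a - cK K a"
    define b' where "b' = b - cK K b"
    have da: "(z has_vector_derivative a') (at s within {s..})" using tflow_facts(2)[OF z s0(1)] a'_def a_def by simp
    have db: "((\<lambda>u. z (u + \<delta>)) has_vector_derivative b') (at s within {s..})"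
      using shift_rderiv[OF tflow_facts(2)[OF z s0(2)]] b'_def b_def by simp
    have "((\<lambda>u. z (u + \<delta>) - z u) has_vector_derivative (b' - a')) (at s within {s..})"
      by (rule has_vector_derivative_diff[OF db da])
    from nsq_rderiv[OF this] have dE: "(E has_real_derivative 2 * ((b - a) \<bullet> (b' - a'))) (at s within {s..})"
      unfolding E_def a_def b_def by simp
    have dx: "((\<lambda>u. exp (-2 * u)) has_real_derivative exp (-2 * s) * (-2)) (at s within {s..})"
    proof -
      have "((\<lambda>u. -2 * u) has_real_derivative -2) (at s within {s..})"
        using DERIV_cmult[OF DERIV_ident[of "at s within {s..}"], of "-2"] by simp
      from DERIV_chain2[OF DERIV_exp this] show ?thesis by (simp add: mult.commute)
    qed
    have "((\<lambda>u. - (exp (-2 * u) * E u)) has_real_derivative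
            - (exp (-2 * s) * (-2) * E s + 2 * ((b - a) \<bullet> (b' - a')) * exp (-2 * s))) (at s within {s..})"
      by (rule DERIV_minus[OF DERIV_mult[OF dx dE]])
    then have d\<phi>: "(\<phi> has_real_derivative exp (-2 * s) * (2 * E s - 2 * ((b - a) \<bullet> (b' - a')))) (at s within {s..})"
      unfolding \<phi>_def by (simp add: algebra_simps)
    have "(cK K b - cK K a) \<bullet> (b - a) \<ge> 0"
      by (rule cK_monotone[OF K]) (use tflow_facts(1)[OF z] s0 a_def b_def in auto)
    moreover have "(b - a) \<bullet> (b' - a') = (b - a) \<bullet> (b - a) - (cK K b - cK K a) \<bullet> (b - a)"
      unfolding a'_def b'_def by (simp add: inner_diff_right inner_diff_left inner_commute algebra_simps)
    moreover have "E s = (b - a) \<bullet> (b - a)" unfolding E_def a_def b_def by (simp add: power2_norm_eq_inner)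
    ultimately have "2 * E s - 2 * ((b - a) \<bullet> (b' - a')) \<ge> 0" by simp
    then have Dpos: "exp (-2 * s) * (2 * E s - 2 * ((b - a) \<bullet> (b' - a'))) \<ge> 0" by simp
    show "\<forall>\<epsilon>>0. \<exists>d>0. \<forall>h. 0 < h \<and> h < d \<longrightarrow> \<phi> (s + h) \<ge> \<phi> s - \<epsilon> * h"
    proof (intro allI impI)
      fix \<epsilon> :: real assume e: "\<epsilon> > 0"
      obtain d where d: "d > 0" "\<forall>h. 0 < h \<and> h < d \<longrightarrow> \<phi> (s + h) \<ge> \<phi> s + h * (exp (-2 * s) * (2 * E s - 2 * ((b - a) \<bullet> (b' - a')))) - \<epsilon> * h"
        using rderiv_dini[OF d\<phi>] e by blast
      show "\<exists>d>0. \<forall>h. 0 < h \<and> h < d \<longrightarrow> \<phi> (s + h) \<ge> \<phi> s - \<epsilon> * h"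
      proof (intro exI[of _ d] conjI allI impI d(1))
        fix h assume h: "0 < h \<and> h < d"
        have "h * (exp (-2 * s) * (2 * E s - 2 * ((b - a) \<bullet> (b' - a')))) \<ge> 0" using h Dpos by simp
        then show "\<phi> (s + h) \<ge> \<phi> s - \<epsilon> * h" using d(2) h by smt
      qed
    qed
  qed
  have "\<phi> u1 \<le> \<phi> u2" by (rule dini_mono[OF u(2) D U])
  then have G: "exp (-2 * u2) * E u2 \<le> exp (-2 * u1) * E u1" unfolding \<phi>_def by simp
  have "E u2 = (exp (2 * u2) * exp (-2 * u2)) * E u2" by (simp add: exp_add[symmetric])
  also have "\<dots> = exp (2 * u2) * (exp (-2 * u2) * E u2)" by simp
  also have "\<dots> \<le> exp (2 * u2) * (exp (-2 * u1) * E u1)" using G by simp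
  also have "\<dots> = (exp (2 * u2) * exp (-2 * u1)) * E u1" by simp
  also have "exp (2 * u2) * exp (-2 * u1) = (exp (u2 - u1))\<^sup>2"
    by (simp add: exp_add[symmetric] power2_eq_square)
  also have "(exp (u2 - u1))\<^sup>2 * E u1 = (exp (u2 - u1) * norm (z (u1 + \<delta>) - z u1))\<^sup>2"
    unfolding E_def by (simp add: power_mult_distrib)
  finally have "(norm (z (u2 + \<delta>) - z u2))\<^sup>2 \<le> (exp (u2 - u1) * norm (z (u1 + \<delta>) - z u1))\<^sup>2" unfolding E_def .
  then show ?thesis by (rule power2_le_imp_le) simp
qed


lemma speed_bound:
  fixes K :: "'a::euclidean_space set"
  assumes K: "closed K" "K \<noteq> {}" and z: "tflow K z" and u: "0 \<le> u1" "u1 \<le> u2"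
  shows "norm (z u2 - cK K (z u2)) \<le> exp (u2 - u1) * norm (z u1 - cK K (z u1))"
proof -
  define v1 where "v1 = z u1 - cK K (z u1)"
  define v2 where "v2 = z u2 - cK K (z u2)"
  define X where "X = exp (u2 - u1)"
  have X0: "X > 0" using X_def by simp
  have main: "norm v2 \<le> X * norm v1 + \<epsilon> * (X + 1)" if e: "\<epsilon> > 0" for \<epsilon>
  proof -
    have u2': "u2 \<ge> 0" using u by simp
    obtain d1 where d1: "d1 > 0" "\<forall>h. 0 < h \<and> h < d1 \<longrightarrow> norm (z (u1 + h) - z u1 - h *\<^sub>R v1) \<le> \<epsilon> * h"
      using rderiv_approx[OF tflow_facts(2)[OF z u(1)] e] v1_def by blast
    obtain d2 where d2: "d2 > 0" "\<forall>h. 0 < h \<and> h < d2 \<longrightarrow> norm (z (u2 + h) - z u2 - h *\<^sub>R v2) \<le> \<epsilon> * h"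
      using rderiv_approx[OF tflow_facts(2)[OF z u2'] e] v2_def by blast
    define \<delta> where "\<delta> = min d1 d2 / 2"
    have \<delta>: "\<delta> > 0" "\<delta> < d1" "\<delta> < d2" using d1 d2 \<delta>_def by auto
    have a1: "norm (z (u1 + \<delta>) - z u1 - \<delta> *\<^sub>R v1) \<le> \<epsilon> * \<delta>" using d1(2) \<delta> by blast
    have a2: "norm (z (u2 + \<delta>) - z u2 - \<delta> *\<^sub>R v2) \<le> \<epsilon> * \<delta>" using d2(2) \<delta> by blast
    have c: "norm (z (u2 + \<delta>) - z u2) \<le> X * norm (z (u1 + \<delta>) - z u1)"
      using contraction[OF K z \<delta>(1) u] X_def by simp
    have "norm (\<delta> *\<^sub>R v2) \<le> norm (z (u2 + \<delta>) - z u2) + norm (z (u2 + \<delta>) - z u2 - \<delta> *\<^sub>R v2)"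
      by (metis norm_minus_commute norm_triangle_sub)
    then have b2: "\<delta> * norm v2 \<le> norm (z (u2 + \<delta>) - z u2) + \<epsilon> * \<delta>" using a2 \<delta>(1) by simp
    have "norm (z (u1 + \<delta>) - z u1) \<le> norm (\<delta> *\<^sub>R v1) + norm (z (u1 + \<delta>) - z u1 - \<delta> *\<^sub>R v1)"
      by (metis add.commute diff_add_cancel norm_triangle_ineq)
    then have b1: "norm (z (u1 + \<delta>) - z u1) \<le> \<delta> * norm v1 + \<epsilon> * \<delta>" using a1 \<delta>(1) by simp
    have "X * norm (z (u1 + \<delta>) - z u1) \<le> X * (\<delta> * norm v1 + \<epsilon> * \<delta>)" using b1 X0 by (intro mult_left_mono) auto
    then have "\<delta> * norm v2 \<le> \<delta> * (X * norm v1 + \<epsilon> * (X + 1))" using b2 c by (simp add: algebra_simps)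
    then show ?thesis using \<delta>(1) by simp
  qed
  show ?thesis
  proof (rule ccontr)
    assume "\<not> ?thesis"
    then have gt: "norm v2 > X * norm v1" using v1_def v2_def X_def by simp
    define \<epsilon> where "\<epsilon> = (norm v2 - X * norm v1) / (2 * (X + 1))"
    have e: "\<epsilon> > 0" using gt X0 \<epsilon>_def by (simp add: divide_pos_pos)
    have "2 * (\<epsilon> * (X + 1)) = norm v2 - X * norm v1" using X0 \<epsilon>_def by (simp add: field_simps)
    then show False using main[OF e] gt by linarith
  qed
qed


lemma F_mono:
  fixes K :: "'a::euclidean_space set"
  assumes K: "closed K" "K \<noteq> {}" and z: "tflow K z" and u: "0 \<le> u1" "u1 \<le> u2"
  shows "FK K (z u1) \<le> FK K (z u2)"
proof -
  define \<phi> where "\<phi> u = (FK K (z u))\<^sup>2" for u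
  define w where "w u = norm (z u - cK K (z u))" for u
  have pf: "\<phi> u = (distK K (z u))\<^sup>2 - (w u)\<^sup>2" if "u \<ge> 0" for u
    using point_facts(1)[OF K tflow_facts(1)[OF z that]] \<phi>_def w_def by simp
  have D: "\<forall>s\<in>{u1..<u2}. \<forall>\<epsilon>>0. \<exists>d>0. \<forall>h. 0 < h \<and> h < d \<longrightarrow> \<phi> (s + h) \<ge> \<phi> s - \<epsilon> * h"
  proof (intro ballI allI impI)
    fix s \<epsilon> :: real assume s: "s \<in> {u1..<u2}" and e: "\<epsilon> > 0"
    then have s0: "s \<ge> 0" using u by auto
    note zs = tflow_facts[OF z s0]
    have m: "\<forall>\<theta>\<in>Theta K (z s). (z s - cK K (z s)) \<bullet> (z s - \<theta>) \<ge> (w s)\<^sup>2"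
      using point_facts(2)[OF K zs(1)] w_def by auto
    have e2: "\<epsilon> / 2 > 0" using e by simp
    obtain d1 where d1: "d1 > 0" "\<forall>h. 0 < h \<and> h < d1 \<longrightarrow> (distK K (z (s + h)))\<^sup>2 \<ge> (distK K (z s))\<^sup>2 + 2 * h * (w s)\<^sup>2 - \<epsilon> / 2 * h"
      using R2_dini[OF K zs(1) zs(2) m e2] by blast
    define d where "d = min d1 (min (1/2) (\<epsilon> / (8 * (w s)\<^sup>2 + 1)))"
    have "8 * (w s)\<^sup>2 + 1 > 0" by (simp add: add_nonneg_pos)
    then have "\<epsilon> / (8 * (w s)\<^sup>2 + 1) > 0" using e by simp
    then have dpos: "d > 0" unfolding d_def using d1 by auto
    show "\<exists>d>0. \<forall>h. 0 < h \<and> h < d \<longrightarrow> \<phi> (s + h) \<ge> \<phi> s - \<epsilon> * h"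
    proof (intro exI[of _ d] conjI allI impI dpos)
      fix h assume h: "0 < h \<and> h < d"
      have h1: "h < d1" "h < 1/2" "h < \<epsilon> / (8 * (w s)\<^sup>2 + 1)" using h unfolding d_def by auto
      have R: "(distK K (z (s + h)))\<^sup>2 \<ge> (distK K (z s))\<^sup>2 + 2 * h * (w s)\<^sup>2 - \<epsilon> / 2 * h"
        using d1(2) h h1 by blast
      have "w (s + h) \<le> exp (s + h - s) * w s" unfolding w_def
        by (rule speed_bound[OF K z s0]) (use h in simp)
      then have "w (s + h) \<le> exp h * w s" by simp
      then have "(w (s + h))\<^sup>2 \<le> (exp h * w s)\<^sup>2" by (rule power_mono) (simp add: w_def)
      also have "\<dots> = exp (2 * h) * (w s)\<^sup>2" by (simp add: power_mult_distrib exp_double[symmetric])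
      also have "\<dots> \<le> (1 + 2 * h + (2 * h)\<^sup>2) * (w s)\<^sup>2"
        using exp_bound[of "2 * h"] h h1 by (intro mult_right_mono) auto
      finally have W: "(w (s + h))\<^sup>2 \<le> (w s)\<^sup>2 + 2 * h * (w s)\<^sup>2 + h * (4 * h * (w s)\<^sup>2)"
        by (simp add: algebra_simps power2_eq_square)
      have "4 * h * (w s)\<^sup>2 \<le> \<epsilon> / 2"
      proof -
        have pos: "8 * (w s)\<^sup>2 + 1 > 0" by (simp add: add_nonneg_pos)
        have "h * (8 * (w s)\<^sup>2 + 1) < \<epsilon> / (8 * (w s)\<^sup>2 + 1) * (8 * (w s)\<^sup>2 + 1)"
          using h1(3) pos by (intro mult_strict_right_mono) auto
        then have "h * (8 * (w s)\<^sup>2 + 1) < \<epsilon>" using pos by simp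
        moreover have "h * (8 * (w s)\<^sup>2) \<le> h * (8 * (w s)\<^sup>2 + 1)" using h by simp
        ultimately show ?thesis by (simp add: algebra_simps)
      qed
      then have "h * (4 * h * (w s)\<^sup>2) \<le> h * (\<epsilon> / 2)" using h by (intro mult_left_mono) auto
      moreover have "\<epsilon> * h = \<epsilon> / 2 * h + h * (\<epsilon> / 2)" by simp
      moreover have "\<phi> s = (distK K (z s))\<^sup>2 - (w s)\<^sup>2" by (rule pf[OF s0])
      moreover have "\<phi> (s + h) = (distK K (z (s + h)))\<^sup>2 - (w (s + h))\<^sup>2" by (rule pf) (use s0 h in auto)
      ultimately show "\<phi> (s + h) \<ge> \<phi> s - \<epsilon> * h" using R W by (smt (verit))
    qed
  qed
  have U: "\<forall>s\<in>{u1<..u2}. \<forall>\<epsilon>>0. \<exists>d>0. \<forall>r. s - d < r \<and> r < s \<longrightarrow> \<phi> r \<le> \<phi> s + \<epsilon>"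
  proof (intro ballI allI impI)
    fix s \<epsilon> :: real assume s: "s \<in> {u1<..u2}" and e: "\<epsilon> > 0"
    then have s0: "s \<ge> 0" using u by auto
    note zs = tflow_facts[OF z s0]
    define F where "F = FK K (z s)"
    have F0: "F \<ge> 0" using point_facts(4)[OF K zs(1)] F_def by simp
    define e' where "e' = min 1 (\<epsilon> / (2 * F + 1))"
    have e': "e' > 0" "e' \<le> 1" "e' * (2 * F + 1) \<le> \<epsilon>"
    proof -
      show "e' > 0" "e' \<le> 1" using e F0 unfolding e'_def by (auto intro: divide_pos_pos)
      have "e' \<le> \<epsilon> / (2 * F + 1)" unfolding e'_def by simp
      then show "e' * (2 * F + 1) \<le> \<epsilon>" using F0 by (simp add: field_simps)
    qed
    obtain \<delta> where dl: "\<delta> > 0" "\<forall>y. y \<notin> K \<longrightarrow> dist y (z s) < \<delta> \<longrightarrow> FK K y \<le> F + e'"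
      using FK_usc[OF K zs(1) e'(1)] F_def by blast
    obtain d where d: "d > 0" "\<forall>r\<in>{0..}. dist r s < d \<longrightarrow> dist (z r) (z s) < \<delta>"
      using zs(3) dl(1) s0 unfolding continuous_on_iff by fastforce
    show "\<exists>d>0. \<forall>r. s - d < r \<and> r < s \<longrightarrow> \<phi> r \<le> \<phi> s + \<epsilon>"
    proof (intro exI[of _ "min d (s - u1)"] conjI allI impI)
      show "min d (s - u1) > 0" using d s by auto
      fix r assume r: "s - min d (s - u1) < r \<and> r < s"
      then have r0: "r \<ge> 0" "dist r s < d" using u by (auto simp: dist_real_def)
      then have "dist (z r) (z s) < \<delta>" using d(2) by auto
      then have Fr: "FK K (z r) \<le> F + e'" using dl(2) tflow_facts(1)[OF z r0(1)] by blast
      have "FK K (z r) \<ge> 0" using point_facts(4)[OF K tflow_facts(1)[OF z r0(1)]] .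
      then have "\<phi> r \<le> (F + e')\<^sup>2" unfolding \<phi>_def using Fr by (intro power_mono) auto
      also have "\<dots> = F\<^sup>2 + e' * (2 * F + e')" by (simp add: power2_eq_square algebra_simps)
      also have "e' * (2 * F + e') \<le> e' * (2 * F + 1)" using e' by (intro mult_left_mono) auto
      finally show "\<phi> r \<le> \<phi> s + \<epsilon>" using e'(3) \<phi>_def F_def by simp
    qed
  qed
  have "\<phi> u1 \<le> \<phi> u2" by (rule dini_mono[OF u(2) D U])
  moreover have "FK K (z u2) \<ge> 0" using point_facts(4)[OF K tflow_facts(1)[OF z]] u by simp
  ultimately show ?thesis unfolding \<phi>_def by (rule power2_le_imp_le)
qed


lemma key_arith:
  fixes R Rp l F w :: real
  assumes R: "R > 0" and Rp: "Rp > l" and l: "l > 0" and F: "F \<ge> 0" "F\<^sup>2 = R\<^sup>2 - w\<^sup>2"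
    and w: "w \<ge> 0" and c: "Rp * F \<le> l * R"
  shows "(Rp / sqrt (Rp\<^sup>2 - l\<^sup>2)) * (w\<^sup>2 / R) \<ge> w"
proof -
  define g where "g = sqrt (Rp\<^sup>2 - l\<^sup>2)"
  have "l\<^sup>2 < Rp\<^sup>2" using Rp l by (intro power_strict_mono) auto
  then have g0: "g > 0" and g2: "g\<^sup>2 = Rp\<^sup>2 - l\<^sup>2" unfolding g_def by auto
  have "(Rp * F)\<^sup>2 \<le> (l * R)\<^sup>2" using c Rp l F by (intro power_mono) auto
  then have "Rp\<^sup>2 * (R\<^sup>2 - w\<^sup>2) \<le> l\<^sup>2 * R\<^sup>2" using F(2) by (simp add: power_mult_distrib)
  moreover have "(g * R)\<^sup>2 = Rp\<^sup>2 * R\<^sup>2 - l\<^sup>2 * R\<^sup>2" by (simp add: g2 power_mult_distrib algebra_simps)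
  moreover have "(Rp * w)\<^sup>2 = Rp\<^sup>2 * R\<^sup>2 - Rp\<^sup>2 * (R\<^sup>2 - w\<^sup>2)" by (simp add: power_mult_distrib algebra_simps)
  ultimately have "(g * R)\<^sup>2 \<le> (Rp * w)\<^sup>2" by linarith
  moreover have "0 \<le> Rp * w" using Rp l w by simp
  ultimately have gw: "g * R \<le> Rp * w" by (rule power2_le_imp_le)
  have gR: "g * R > 0" using g0 R by simp
  have eq: "(Rp / g) * (w\<^sup>2 / R) = w * ((Rp * w) / (g * R))" by (simp add: power2_eq_square)
  have "1 \<le> (Rp * w) / (g * R)" using gw gR by simp
  then have "w * 1 \<le> w * ((Rp * w) / (g * R))" using w by (rule mult_left_mono)
  then show ?thesis unfolding g_def[symmetric] eq by simp
qed

lemma chord: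
  fixes K :: "'a::euclidean_space set"
  assumes K: "closed K" "K \<noteq> {}" and z: "tflow K z" and u: "0 \<le> u1" "u1 \<le> u2" and l: "l > 0"
    and hyp: "\<forall>u\<in>{u1..u2}. distK K (z u) - \<alpha> > l \<and> (distK K (z u) - \<alpha>) * FK K (z u) \<le> l * distK K (z u)"
  shows "norm (z u2 - z u1) \<le> sqrt ((distK K (z u2) - \<alpha>)\<^sup>2 - l\<^sup>2) - sqrt ((distK K (z u1) - \<alpha>)\<^sup>2 - l\<^sup>2)"
proof -
  define g where "g u = sqrt ((distK K (z u) - \<alpha>)\<^sup>2 - l\<^sup>2)" for u
  define H where "H u = g u - norm (z u - z u1)" for u
  have "continuous_on {u1..u2} z" by (rule tflow_cont_sub[OF z u(1)])
  then have "continuous_on {u1..u2} H" unfolding H_def g_def distK_def by (intro continuous_intros)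
  note U = cont_U[OF this]
  have D: "\<forall>s\<in>{u1..<u2}. \<forall>\<epsilon>>0. \<exists>d>0. \<forall>h. 0 < h \<and> h < d \<longrightarrow> H (s + h) \<ge> H s - \<epsilon> * h"
  proof (intro ballI allI impI)
    fix s \<epsilon> :: real assume s: "s \<in> {u1..<u2}" and e: "\<epsilon> > 0"
    then have s0: "s \<ge> 0" using u by auto
    note zs = tflow_facts[OF z s0]
    define R where "R = distK K (z s)"
    define w where "w = norm (z s - cK K (z s))"
    have R0: "R > 0" using Theta_basic(1)[OF K zs(1)] R_def by simp
    have hs: "R - \<alpha> > l" "(R - \<alpha>) * FK K (z s) \<le> l * R" using hyp s R_def by auto
    have m: "\<forall>\<theta>\<in>Theta K (z s). (z s - cK K (z s)) \<bullet> (z s - \<theta>) \<ge> w\<^sup>2"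
      using point_facts(2)[OF K zs(1)] w_def by auto
    define f1 where "f1 u = (distK K (z u))\<^sup>2" for u
    have d1: "\<forall>\<epsilon>>0. \<exists>d>0. \<forall>h. 0 < h \<and> h < d \<longrightarrow> f1 (s + h) \<ge> f1 s + h * (2 * w\<^sup>2) - \<epsilon> * h"
    proof (intro allI impI)
      fix \<epsilon>' :: real assume "\<epsilon>' > 0"
      from R2_dini[OF K zs(1) zs(2) m this] show "\<exists>d>0. \<forall>h. 0 < h \<and> h < d \<longrightarrow> f1 (s + h) \<ge> f1 s + h * (2 * w\<^sup>2) - \<epsilon>' * h"
        unfolding f1_def by (simp add: algebra_simps)
    qed
    have f1s: "f1 s = R\<^sup>2" using f1_def R_def by simp
    have "f1 s > 0" using R0 f1s by simp
    then have dsq: "(sqrt has_real_derivative inverse (sqrt (f1 s)) / 2) (at (f1 s))"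
      by (rule DERIV_real_sqrt)
    have c2: "\<forall>\<epsilon>>0. \<exists>d>0. \<forall>h. 0 < h \<and> h < d \<longrightarrow> sqrt (f1 (s + h)) \<ge> sqrt (f1 s) + h * (inverse (sqrt (f1 s)) / 2 * (2 * w\<^sup>2)) - \<epsilon> * h"
    proof (rule dini_chain[OF d1 _ _ dsq])
      show "\<And>y1 y2. 0 \<le> y1 \<Longrightarrow> y1 \<le> y2 \<Longrightarrow> sqrt y1 \<le> sqrt y2" by simp
      show "0 < f1 s" using \<open>f1 s > 0\<close> .
      show "0 \<le> inverse (sqrt (f1 s)) / 2" using \<open>f1 s > 0\<close> by simp
    qed
    define f2 where "f2 u = distK K (z u)" for u
    have sq: "sqrt (f1 u) = f2 u" for u unfolding f1_def f2_def distK_def by (simp add: infdist_nonneg)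
    have A2: "inverse (f2 s) / 2 * (2 * w\<^sup>2) = w\<^sup>2 / R" using R0 by (simp add: f2_def R_def field_simps)
    have d2: "\<forall>\<epsilon>>0. \<exists>d>0. \<forall>h. 0 < h \<and> h < d \<longrightarrow> f2 (s + h) \<ge> f2 s + h * (w\<^sup>2 / R) - \<epsilon> * h"
      using c2 unfolding sq A2 .
    define q where "q r = (r - \<alpha>)\<^sup>2 - l\<^sup>2" for r
    have f2s: "f2 s = R" using f2_def R_def by simp
    have "l\<^sup>2 < (R - \<alpha>)\<^sup>2" using hs l by (intro power_strict_mono) auto
    then have qpos: "q (f2 s) > 0" using f2s q_def by simp
    have dq: "(q has_real_derivative 2 * (f2 s - \<alpha>)) (at (f2 s))"
      unfolding q_def by (auto intro!: derivative_eq_intros)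
    have dk: "((\<lambda>r. sqrt (q r)) has_real_derivative inverse (sqrt (q (f2 s))) / 2 * (2 * (f2 s - \<alpha>))) (at (f2 s))"
      by (rule DERIV_chain2[OF DERIV_real_sqrt[OF qpos] dq])
    have km: "sqrt (q y1) \<le> sqrt (q y2)" if "\<alpha> + l \<le> y1" "y1 \<le> y2" for y1 y2
    proof -
      have "(y1 - \<alpha>)\<^sup>2 \<le> (y2 - \<alpha>)\<^sup>2" using that l by (intro power_mono) auto
      then show ?thesis unfolding q_def by simp
    qed
    have Dk0: "inverse (sqrt (q (f2 s))) / 2 * (2 * (f2 s - \<alpha>)) \<ge> 0" using qpos hs f2s l by simp
    have c3: "\<forall>\<epsilon>>0. \<exists>d>0. \<forall>h. 0 < h \<and> h < d \<longrightarrow> sqrt (q (f2 (s + h))) \<ge> sqrt (q (f2 s)) + h * (inverse (sqrt (q (f2 s))) / 2 * (2 * (f2 s - \<alpha>)) * (w\<^sup>2 / R)) - \<epsilon> * h"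
      by (rule dini_chain[OF d2 km _ dk Dk0]) (use f2s hs in auto)
    have gq: "g u = sqrt (q (f2 u))" for u unfolding g_def q_def f2_def ..
    have A3: "inverse (sqrt (q (f2 s))) / 2 * (2 * (f2 s - \<alpha>)) * (w\<^sup>2 / R) = ((R - \<alpha>) / sqrt ((R - \<alpha>)\<^sup>2 - l\<^sup>2)) * (w\<^sup>2 / R)"
    proof -
      have qR: "q R = (R - \<alpha>)\<^sup>2 - l\<^sup>2" by (simp add: q_def)
      have "sqrt ((R - \<alpha>)\<^sup>2 - l\<^sup>2) > 0" using qpos qR f2s by simp
      then show ?thesis unfolding qR f2s using R0 by (simp add: field_simps)
    qed
    have pf: "(FK K (z s))\<^sup>2 = R\<^sup>2 - w\<^sup>2" using point_facts(1)[OF K zs(1)] R_def w_def by simp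
    have Aw: "((R - \<alpha>) / sqrt ((R - \<alpha>)\<^sup>2 - l\<^sup>2)) * (w\<^sup>2 / R) \<ge> w"
      by (rule key_arith[OF R0 hs(1) l point_facts(4)[OF K zs(1)] pf _ hs(2)]) (simp add: w_def)
    have e2: "\<epsilon> / 2 > 0" using e by simp
    have c3': "\<forall>\<epsilon>>0. \<exists>d>0. \<forall>h. 0 < h \<and> h < d \<longrightarrow> sqrt (q (f2 (s + h))) \<ge> sqrt (q (f2 s)) + h * (((R - \<alpha>) / sqrt ((R - \<alpha>)\<^sup>2 - l\<^sup>2)) * (w\<^sup>2 / R)) - \<epsilon> * h"
      using c3 unfolding A3 .
    obtain d3 where d3: "d3 > 0" "\<forall>h. 0 < h \<and> h < d3 \<longrightarrow> sqrt (q (f2 (s + h))) \<ge> sqrt (q (f2 s)) + h * (((R - \<alpha>) / sqrt ((R - \<alpha>)\<^sup>2 - l\<^sup>2)) * (w\<^sup>2 / R)) - \<epsilon> / 2 * h"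
      using c3' e2 by blast
    obtain d4 where d4: "d4 > 0" "\<forall>h. 0 < h \<and> h < d4 \<longrightarrow> norm (z (s + h) - z s - h *\<^sub>R (z s - cK K (z s))) \<le> \<epsilon> / 2 * h"
      using rderiv_approx[OF zs(2) e2] by blast
    show "\<exists>d>0. \<forall>h. 0 < h \<and> h < d \<longrightarrow> H (s + h) \<ge> H s - \<epsilon> * h"
    proof (intro exI[of _ "min d3 d4"] conjI allI impI)
      show "min d3 d4 > 0" using d3 d4 by simp
      fix h assume h: "0 < h \<and> h < min d3 d4"
      have G: "g (s + h) \<ge> g s + h * (((R - \<alpha>) / sqrt ((R - \<alpha>)\<^sup>2 - l\<^sup>2)) * (w\<^sup>2 / R)) - \<epsilon> / 2 * h"
        using d3(2) h unfolding gq by auto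
      have hw: "h * (((R - \<alpha>) / sqrt ((R - \<alpha>)\<^sup>2 - l\<^sup>2)) * (w\<^sup>2 / R)) \<ge> h * w"
        using Aw h by (intro mult_left_mono) auto
      have N: "norm (z (s + h) - z s - h *\<^sub>R (z s - cK K (z s))) \<le> \<epsilon> / 2 * h" using d4(2) h by auto
      have "z (s + h) - z s = h *\<^sub>R (z s - cK K (z s)) + (z (s + h) - z s - h *\<^sub>R (z s - cK K (z s)))" by simp
      then have "norm (z (s + h) - z s) \<le> norm (h *\<^sub>R (z s - cK K (z s))) + norm (z (s + h) - z s - h *\<^sub>R (z s - cK K (z s)))"
        by (metis norm_triangle_ineq)
      also have "norm (h *\<^sub>R (z s - cK K (z s))) = h * w" using h w_def by simp
      finally have N2: "norm (z (s + h) - z s) \<le> h * w + \<epsilon> / 2 * h" using N by linarith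
      have "z (s + h) - z u1 = (z s - z u1) + (z (s + h) - z s)" by simp
      then have "norm (z (s + h) - z u1) \<le> norm (z s - z u1) + norm (z (s + h) - z s)"
        by (metis norm_triangle_ineq)
      moreover have "\<epsilon> / 2 * h + \<epsilon> / 2 * h = \<epsilon> * h" by (simp add: field_simps)
      ultimately show "H (s + h) \<ge> H s - \<epsilon> * h" unfolding H_def using G hw N2 by linarith
    qed
  qed
  have "H u1 \<le> H u2" by (rule dini_mono[OF u(2) D U])
  then show ?thesis unfolding H_def g_def by simp
qed


lemma time_change:
  fixes r :: "real \<Rightarrow> real"
  assumes rc: "continuous_on UNIV r" and rm: "\<And>t. r t \<ge> m" and m: "m > 0"
  shows "\<exists>T S. T 0 = 0 \<and> (\<forall>t1 t2. -1 \<le> t1 \<longrightarrow> t1 \<le> t2 \<longrightarrow> T t1 \<le> T t2) \<and>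
     (\<forall>t\<ge>0. T t \<ge> 0 \<and> S (T t) = t) \<and>
     (\<forall>\<sigma>\<ge>0. S \<sigma> \<ge> 0 \<and> T (S \<sigma>) = \<sigma> \<and> (S has_real_derivative inverse (r (S \<sigma>))) (at \<sigma>))"
proof -
  define I where "I t = integral {-2..t} r" for t
  define T where "T t = I t - I 0" for t
  have dT: "(T has_real_derivative r t) (at t)" if t: "t > -2" for t
  proof -
    have "continuous_on {-2..t+1} r" using rc by (rule continuous_on_subset) auto
    then have "((\<lambda>u. integral {-2..u} r) has_vector_derivative r t) (at t within {-2..t+1})"
      by (rule integral_has_vector_derivative) (use t in auto)
    moreover have "at t within {-2..t+1} = at t" by (rule at_within_interior) (use t in auto)
    ultimately have "(I has_real_derivative r t) (at t)"
      unfolding I_def by (simp add: has_real_derivative_iff_has_vector_derivative)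
    then show ?thesis unfolding T_def by (auto intro!: derivative_eq_intros)
  qed
  have Tc: "isCont T t" if "t > -2" for t using dT[OF that] by (rule DERIV_isCont)
  have Tcon: "continuous_on {a..b} T" if "a > -2" for a b
    using Tc that by (intro continuous_at_imp_continuous_on) auto
  have T0: "T 0 = 0" unfolding T_def by simp
  have Tstrict: "T t1 < T t2" if "-1 \<le> t1" "t1 < t2" for t1 t2
  proof (rule DERIV_pos_imp_increasing[OF that(2)])
    fix x assume "t1 \<le> x" "x \<le> t2"
    then have "x > -2" using that(1) by linarith
    moreover have "r x > 0" using rm[of x] m by linarith
    ultimately show "\<exists>y. (T has_real_derivative y) (at x) \<and> y > 0" using dT[of x] by blast
  qed
  have Tmono: "T t1 \<le> T t2" if "-1 \<le> t1" "t1 \<le> t2" for t1 t2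
  proof (cases "t1 = t2")
    case False
    then have "t1 < t2" using that(2) by simp
    then show ?thesis using Tstrict[OF that(1)] by (simp add: less_imp_le)
  qed simp
  have Tgrow: "T t \<ge> m * t" if "t \<ge> 0" for t
  proof -
    have "T 0 - m * 0 \<le> T t - m * t"
    proof (rule DERIV_nonneg_imp_nondecreasing[OF that])
      fix x :: real assume "0 \<le> x" "x \<le> t"
      then have "((\<lambda>t. T t - m * t) has_real_derivative r x - m) (at x)"
        using dT[of x] by (auto intro!: derivative_eq_intros)
      then show "\<exists>y. ((\<lambda>t. T t - m * t) has_real_derivative y) (at x) \<and> y \<ge> 0" using rm[of x] by auto
    qed
    then show ?thesis using T0 by simp
  qed
  have ex: "\<exists>t\<ge>-1. T t = \<sigma>" if sg: "\<sigma> \<ge> T (-1/2)" for \<sigma>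
  proof (cases "\<sigma> \<ge> 0")
    case True
    have "T 0 \<le> \<sigma>" "\<sigma> \<le> T (\<sigma> / m)" using T0 True Tgrow[of "\<sigma>/m"] m by auto
    then obtain t where "0 \<le> t" "T t = \<sigma>" using IVT'[of T 0 \<sigma> "\<sigma>/m"] Tcon[of 0 "\<sigma>/m"] True m by force
    then show ?thesis by (intro exI[of _ t]) auto
  next
    case False
    then have "T (-1/2) \<le> \<sigma>" "\<sigma> \<le> T 0" using sg T0 by auto
    then obtain t where "-1/2 \<le> t" "T t = \<sigma>" using IVT'[of T "-1/2" \<sigma> 0] Tcon[of "-1/2" 0] by force
    then show ?thesis by (intro exI[of _ t]) auto
  qed
  define S where "S \<sigma> = (THE t. -1 \<le> t \<and> T t = \<sigma>)" for \<sigma>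
  have ST: "S (T t) = t" if "-1 \<le> t" for t
    unfolding S_def
  proof (rule the_equality)
    show "-1 \<le> t \<and> T t = T t" using that by simp
    fix t' assume "-1 \<le> t' \<and> T t' = T t"
    then show "t' = t" using Tstrict that by (metis linorder_neqE_linordered_idom less_irrefl)
  qed
  have TS: "T (S \<sigma>) = \<sigma>" "S \<sigma> \<ge> -1" if sg: "\<sigma> \<ge> T (-1/2)" for \<sigma>
  proof -
    obtain t where "t \<ge> -1" "T t = \<sigma>" using ex[OF sg] by blast
    then show "T (S \<sigma>) = \<sigma>" "S \<sigma> \<ge> -1" using ST by auto
  qed
  have Tneg: "T (-1/2) < 0" using Tstrict[of "-1/2" 0] T0 by simp
  have P1: "\<forall>t1 t2. -1 \<le> t1 \<longrightarrow> t1 \<le> t2 \<longrightarrow> T t1 \<le> T t2" using Tmono by blast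
  have P2: "\<forall>t\<ge>0. T t \<ge> 0 \<and> S (T t) = t" using Tmono[of 0] T0 ST by auto
  have P3: "S \<sigma> \<ge> 0 \<and> T (S \<sigma>) = \<sigma> \<and> (S has_real_derivative inverse (r (S \<sigma>))) (at \<sigma>)" if s: "\<sigma> \<ge> 0" for \<sigma>
  proof (intro conjI)
    have s': "\<sigma> \<ge> T (-1/2)" using Tneg s by simp
    show TSs: "T (S \<sigma>) = \<sigma>" by (rule TS(1)[OF s'])
    show S0: "S \<sigma> \<ge> 0"
    proof (rule ccontr)
      assume "\<not> S \<sigma> \<ge> 0"
      then have "T (S \<sigma>) < T 0" using Tstrict[of "S \<sigma>" 0] TS(2)[OF s'] by simp
      then show False using TSs T0 s by simp
    qed
    have Sge: "S \<sigma> \<ge> -1" by (rule TS(2)[OF s'])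
    have cS: "isCont S \<sigma>"
    proof -
      have "isCont S (T (S \<sigma>))"
      proof (rule isCont_inverse_function[where d=1 and x="S \<sigma>" and f=T and g=S])
        fix z assume "\<bar>z - S \<sigma>\<bar> \<le> 1"
        then have "- (z - S \<sigma>) \<le> 1" by (rule abs_le_D2)
        then have z: "z \<ge> -1" "z > -2" using \<open>S \<sigma> \<ge> 0\<close> by linarith+
        show "S (T z) = z" by (rule ST[OF z(1)])
      next
        fix z assume "\<bar>z - S \<sigma>\<bar> \<le> 1"
        then have "- (z - S \<sigma>) \<le> 1" by (rule abs_le_D2)
        then have z: "z > -2" using \<open>S \<sigma> \<ge> 0\<close> by linarith
        show "isCont T z" by (rule Tc[OF z])
      qed simp
      then show ?thesis using TSs by simp
    qed
    show "(S has_real_derivative inverse (r (S \<sigma>))) (at \<sigma>)"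
    proof (rule DERIV_inverse_function[of T "r (S \<sigma>)" S \<sigma> "T (-1/2)" "\<sigma> + 1"])
      show "(T has_real_derivative r (S \<sigma>)) (at (S \<sigma>))" using dT Sge by simp
      show "r (S \<sigma>) \<noteq> 0" using rm[of "S \<sigma>"] m by auto
      show "T (-1/2) < \<sigma>" using Tneg s by simp
      show "\<sigma> < \<sigma> + 1" by simp
      fix y assume "T (-1/2) < y" "y < \<sigma> + 1"
      then show "T (S y) = y" using TS(1) by simp
    next
      show "isCont S \<sigma>" by (rule cS)
    qed
  qed
  show ?thesis using T0 P1 P2 P3 by blast
qed


lemma flow_facts:
  fixes K :: "'a::euclidean_space set"
  assumes fl: "is_flow K Phi" and y: "y \<notin> K"
  shows "\<And>t. t \<ge> 0 \<Longrightarrow> Phi t y \<notin> K" "Phi 0 y = y" "continuous_on {0..} (\<lambda>t. Phi t y)"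
    "\<And>t. t \<ge> 0 \<Longrightarrow> ((\<lambda>s. Phi s y) has_vector_derivative gradK K (Phi t y)) (at t within {t..})"
proof -
  note d = fl[unfolded is_flow_def]
  show "\<And>t. t \<ge> 0 \<Longrightarrow> Phi t y \<notin> K" using d y by auto
  show "Phi 0 y = y" using d y by auto
  show "\<And>t. t \<ge> 0 \<Longrightarrow> ((\<lambda>s. Phi s y) has_vector_derivative gradK K (Phi t y)) (at t within {t..})"
    using d y by auto
  have c: "continuous_on ({0..} \<times> - K) (\<lambda>(t, x). Phi t x)" using d by blast
  have "continuous_on {0..} (\<lambda>t. (\<lambda>(t, x). Phi t x) (t, y))"
    by (rule continuous_on_compose2[OF c]) (use y in \<open>auto intro!: continuous_intros\<close>)
  then show "continuous_on {0..} (\<lambda>t. Phi t y)" by simp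
qed

lemma reparam:
  fixes K :: "'a::euclidean_space set"
  assumes K: "closed K" "bounded (- K)" and fl: "is_flow K Phi" and y: "y \<notin> K"
  shows "\<exists>z T. tflow K z \<and> T 0 = 0 \<and> (\<forall>t\<ge>0. T t \<ge> 0 \<and> Phi t y = z (T t)) \<and>
           (\<forall>t1 t2. 0 \<le> t1 \<longrightarrow> t1 \<le> t2 \<longrightarrow> T t1 \<le> T t2)"
proof -
  define x where "x t = Phi t y" for t
  note ff = flow_facts[OF fl y, folded x_def]
  have Kne: "K \<noteq> {}" by (rule K_nonempty[OF K(2)])
  then obtain k0 where k0: "k0 \<in> K" by auto
  obtain B where B: "\<forall>p\<in>-K. norm p \<le> B" using K(2) unfolding bounded_iff by blast
  define Rmax where "Rmax = B + norm k0 + 1"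
  have Rb: "distK K (x t) \<le> Rmax" if "t \<ge> 0" for t
  proof -
    have "distK K (x t) \<le> dist (x t) k0" unfolding distK_def by (rule infdist_le[OF k0])
    also have "\<dots> \<le> norm (x t) + norm k0" by (simp add: dist_norm norm_triangle_ineq4)
    also have "norm (x t) \<le> B" using B ff(1)[OF that] by auto
    finally show ?thesis unfolding Rmax_def by simp
  qed
  have Rp: "distK K (x t) > 0" if "t \<ge> 0" for t using Theta_basic(1)[OF K(1) Kne ff(1)[OF that]] .
  have Rmax0: "Rmax > 0" using Rb[of 0] Rp[of 0] by simp
  define r where "r s = inverse (distK K (x (max 0 s)))" for s
  have cx: "continuous_on UNIV (\<lambda>s. x (max 0 s))"
    by (rule continuous_on_compose2[OF ff(3)]) (auto intro!: continuous_intros)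
  have nz: "\<forall>s\<in>UNIV. infdist (x (max 0 s)) K \<noteq> 0"
  proof
    fix s :: real
    have "0 < infdist (x (max 0 s)) K" using Rp[of "max 0 s"] unfolding distK_def by simp
    then show "infdist (x (max 0 s)) K \<noteq> 0" by simp
  qed
  have "continuous_on UNIV (\<lambda>s. infdist (x (max 0 s)) K)" by (intro continuous_intros cx)
  then have rc: "continuous_on UNIV r" unfolding r_def distK_def
    by (rule continuous_on_inverse[OF _ nz])
  have rm: "r s \<ge> inverse Rmax" for s
    unfolding r_def using Rb[of "max 0 s"] Rp[of "max 0 s"] by (intro le_imp_inverse_le) auto
  have m0: "inverse Rmax > 0" using Rmax0 by simp
  obtain T S where T0: "T 0 = 0" and Tm: "\<forall>t1 t2. -1 \<le> t1 \<longrightarrow> t1 \<le> t2 \<longrightarrow> T t1 \<le> T t2"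
    and TS: "\<forall>t\<ge>0. T t \<ge> 0 \<and> S (T t) = t"
    and ST: "\<forall>\<sigma>\<ge>0. S \<sigma> \<ge> 0 \<and> T (S \<sigma>) = \<sigma> \<and> (S has_real_derivative inverse (r (S \<sigma>))) (at \<sigma>)"
    using time_change[OF rc rm m0] by blast
  define z where "z u = x (S u)" for u
  have Smono: "S u \<le> S v" if "0 \<le> u" "u \<le> v" for u v
  proof (rule ccontr)
    assume "\<not> S u \<le> S v"
    then have "S v < S u" by simp
    moreover have "S v \<ge> 0" "S u \<ge> 0" using ST that by auto
    ultimately have "T (S v) \<le> T (S u)" using Tm by auto
    then have "v \<le> u" using ST that by auto
    then have "v = u" using that by simp
    then show False using \<open>S v < S u\<close> by simp
  qed
  have tf: "tflow K z" unfolding tflow_def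
  proof (intro conjI allI impI)
    fix u :: real assume u: "u \<ge> 0"
    show "z u \<notin> K" unfolding z_def using ff(1) ST u by auto
  next
    have "continuous_on {0..} S"
      using ST by (intro continuous_at_imp_continuous_on) (auto intro: DERIV_isCont)
    then show "continuous_on {0..} z" unfolding z_def
      by (rule continuous_on_compose2[OF ff(3)]) (use ST in auto)
  next
    fix u :: real assume u: "u \<ge> 0"
    have Su: "S u \<ge> 0" using ST u by auto
    have "(S has_real_derivative inverse (r (S u))) (at u within {u..})"
      using ST u by (auto intro: has_field_derivative_at_within)
    then have dS: "(S has_vector_derivative distK K (x (S u))) (at u within {u..})"
      unfolding r_def using Su by (simp add: has_real_derivative_iff_has_vector_derivative)
    have "S ` {u..} \<subseteq> {S u..}" using Smono u by auto
    then have dx: "(x has_vector_derivative gradK K (x (S u))) (at (S u) within S ` {u..})"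
      using ff(4)[OF Su] unfolding x_def by (rule has_vector_derivative_within_subset[rotated])
    have "((x \<circ> S) has_vector_derivative distK K (x (S u)) *\<^sub>R gradK K (x (S u))) (at u within {u..})"
      by (rule vector_diff_chain_within[OF dS dx])
    moreover have "distK K (x (S u)) *\<^sub>R gradK K (x (S u)) = x (S u) - cK K (x (S u))"
      unfolding gradK_def cK_def using Rp[OF Su] by simp
    ultimately show "(z has_vector_derivative z u - cK K (z u)) (at u within {u..})"
      unfolding z_def by (simp add: o_def)
  qed
  show ?thesis
  proof (intro exI[of _ z] exI[of _ T] conjI tf T0 allI impI)
    fix t :: real assume t: "t \<ge> 0"
    show "T t \<ge> 0" using TS t by auto
    show "Phi t y = z (T t)" unfolding z_def x_def using TS t by auto
  next
    fix t1 t2 :: real assume "0 \<le> t1" "t1 \<le> t2" then show "T t1 \<le> T t2" using Tm by auto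
  qed
qed


lemma offset_F:
  fixes K :: "'a::euclidean_space set"
  assumes K: "closed K" "K \<noteq> {}" and a: "\<alpha> \<ge> 0" and p: "distK K p > \<alpha>"
  shows "(distK K p - \<alpha>) * FK K p \<le> FK (offset K \<alpha>) p * distK K p"
proof -
  define R where "R = distK K p"
  have R: "R > \<alpha>" "R > 0" using p a R_def by auto
  have pK: "p \<notin> K" using R unfolding R_def distK_def by (auto simp: infdist_zero)
  define Off where "Off = offset K \<alpha>"
  have Ocl: "closed Off" unfolding Off_def offset_def by (intro closed_Collect_le continuous_intros continuous_on_id)
  have KO: "K \<subseteq> Off" unfolding Off_def offset_def using a by auto
  have One: "Off \<noteq> {}" using KO K(2) by auto
  have pO: "p \<notin> Off" using R unfolding Off_def offset_def R_def distK_def by auto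
  define k where "k = (R - \<alpha>) / R"
  have k: "k > 0" "k * R = R - \<alpha>" using R k_def by auto
  define f where "f \<theta> = p + k *\<^sub>R (\<theta> - p)" for \<theta>
  have fO: "f \<theta> \<in> Off" "dist p (f \<theta>) = R - \<alpha>" if th: "\<theta> \<in> Theta K p" for \<theta>
  proof -
    have tK: "\<theta> \<in> K" and dt: "dist p \<theta> = R" using Theta_basic(4)[OF K pK th] R_def by auto
    have "dist p (f \<theta>) = k * dist p \<theta>" unfolding f_def using k by (simp add: dist_norm norm_minus_commute)
    then show "dist p (f \<theta>) = R - \<alpha>" using dt k by simp
    have "f \<theta> - \<theta> = (1 - k) *\<^sub>R (p - \<theta>)" unfolding f_def by (simp add: algebra_simps)
    moreover have k1: "1 - k \<ge> 0" using a R by (simp add: k_def field_simps)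
    ultimately have "dist (f \<theta>) \<theta> = (1 - k) * dist p \<theta>" by (simp add: dist_norm)
    also have "\<dots> = \<alpha>" using dt k R by (simp add: k_def field_simps)
    finally have "infdist (f \<theta>) K \<le> \<alpha>" using infdist_le[OF tK, of "f \<theta>"] by simp
    then show "f \<theta> \<in> Off" unfolding Off_def offset_def by simp
  qed
  obtain \<theta>0 where t0: "\<theta>0 \<in> Theta K p" using Theta_basic(2)[OF K pK] by blast
  have dO: "distK Off p = R - \<alpha>"
  proof (rule antisym)
    show "distK Off p \<le> R - \<alpha>" unfolding distK_def using infdist_le[OF fO(1)[OF t0], of p] fO(2)[OF t0] by simp
    obtain q where q: "q \<in> Off" "infdist p Off = dist p q" using infdist_attains_inf[OF Ocl One] by blast
    have "R \<le> infdist q K + dist p q" using infdist_triangle[of p K q] unfolding R_def distK_def by (simp add: dist_commute)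
    moreover have "infdist q K \<le> \<alpha>" using q(1) unfolding Off_def offset_def by simp
    ultimately show "R - \<alpha> \<le> distK Off p" unfolding distK_def using q(2) by simp
  qed
  note tbO = Theta_basic[OF Ocl One pO]
  define c' where "c' = enc_center (Theta Off p)"
  define F' where "F' = enc_radius (Theta Off p)"
  have fT: "f \<theta> \<in> Theta Off p" if "\<theta> \<in> Theta K p" for \<theta>
    unfolding Theta_def using fO[OF that] dO by simp
  define c'' where "c'' = p + (1 / k) *\<^sub>R (c' - p)"
  have "Theta K p \<subseteq> cball c'' (F' / k)"
  proof
    fix \<theta> assume th: "\<theta> \<in> Theta K p"
    have "dist c' (f \<theta>) \<le> F'" using enc_attained[OF tbO(3) tbO(2)] fT[OF th] c'_def F'_def by auto
    moreover have "c' - f \<theta> = k *\<^sub>R (c'' - \<theta>)" unfolding c''_def f_def using k by (simp add: algebra_simps)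
    ultimately have "k * dist c'' \<theta> \<le> F'" using k by (simp add: dist_norm)
    then show "\<theta> \<in> cball c'' (F' / k)" using k by (simp add: field_simps)
  qed
  then have "FK K p \<le> F' / k" unfolding FK_def by (rule enc_lower[OF Theta_basic(2)[OF K pK]])
  then have "k * FK K p \<le> F'" using k by (simp add: field_simps)
  then have "(k * FK K p) * R \<le> F' * R" using R by (intro mult_right_mono) auto
  moreover have "(k * FK K p) * R = (R - \<alpha>) * FK K p" using R by (simp add: k_def)
  ultimately have "(R - \<alpha>) * FK K p \<le> F' * R" by simp
  then show ?thesis unfolding F'_def Off_def R_def FK_def .
qed


lemma mono_seq:
  fixes p :: "nat \<Rightarrow> real"
  assumes "\<forall>i<n. p i \<le> p (Suc i)" "i \<le> j" "j \<le> n"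
  shows "p i \<le> p j"
  using assms(2,3)
proof (induction j)
  case 0 then show ?case by simp
next
  case (Suc j)
  show ?case
  proof (cases "i = Suc j")
    case False
    then have "i \<le> j" using Suc.prems by simp
    then have "p i \<le> p j" using Suc by simp
    also have "p j \<le> p (Suc j)" using assms(1) Suc.prems by simp
    finally show ?thesis .
  qed simp
qed

lemma telescope:
  fixes p :: "nat \<Rightarrow> real" and \<gamma> :: "real \<Rightarrow> 'a::metric_space"
  assumes mono: "\<forall>i<n. p i \<le> p (Suc i)"
    and ch: "\<And>a b. p 0 \<le> a \<Longrightarrow> a \<le> b \<Longrightarrow> b \<le> p n \<Longrightarrow> dist (\<gamma> a) (\<gamma> b) \<le> g b - g a"
  shows "(\<Sum>i<n. dist (\<gamma> (p i)) (\<gamma> (p (Suc i)))) \<le> g (p n) - g (p 0)"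
proof -
  have "m \<le> n \<Longrightarrow> (\<Sum>i<m. dist (\<gamma> (p i)) (\<gamma> (p (Suc i)))) \<le> g (p m) - g (p 0)" for m
  proof (induction m)
    case 0 then show ?case by simp
  next
    case (Suc m)
    have a: "p 0 \<le> p m" by (rule mono_seq[OF mono]) (use Suc in auto)
    have b: "p m \<le> p (Suc m)" using mono Suc by auto
    have c: "p (Suc m) \<le> p n" by (rule mono_seq[OF mono]) (use Suc in auto)
    have "dist (\<gamma> (p m)) (\<gamma> (p (Suc m))) \<le> g (p (Suc m)) - g (p m)" by (rule ch[OF a b c])
    then show ?case using Suc by simp
  qed
  then show ?thesis by simp
qed

theorem lemma10p1:
  fixes K :: "'a::euclidean_space set" and Phi :: "real \<Rightarrow> 'a \<Rightarrow> 'a"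
    and \<alpha> l t :: real and y :: 'a
  assumes "closed K" and "bounded (- K)"
    and "is_flow K Phi"
    and "\<alpha> \<ge> 0" and "l > 0"
    and "y \<in> - offset K \<alpha> - axis l \<alpha> K"
    and "distK K y - \<alpha> > l"
    and "t \<ge> 0" and "arc_length (\<lambda>\<tau>. Phi \<tau> y) 0 t > 0"
    and "Phi t y \<notin> axis l \<alpha> K"
  shows "(distK K (Phi t y) - \<alpha>)\<^sup>2 \<ge>
           (sqrt ((distK K y - \<alpha>)\<^sup>2 - l\<^sup>2) + arc_length (\<lambda>\<tau>. Phi \<tau> y) 0 t)\<^sup>2 + l\<^sup>2"
proof -
  note Kc = assms(1) and Kb = assms(2) and fl = assms(3) and a0 = assms(4) and l0 = assms(5)
    and yR = assms(7) and t0 = assms(8) and L0 = assms(9) and tax = assms(10)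
  have Kne: "K \<noteq> {}" by (rule K_nonempty[OF Kb])
  have yK: "y \<notin> K"
  proof
    assume "y \<in> K" then have "distK K y = 0" unfolding distK_def by simp
    then show False using yR a0 l0 by simp
  qed
  obtain z T where z: "tflow K z" and T0: "T 0 = 0" and Tz: "\<forall>t\<ge>0. T t \<ge> 0 \<and> Phi t y = z (T t)"
    and Tm: "\<forall>t1 t2. 0 \<le> t1 \<longrightarrow> t1 \<le> t2 \<longrightarrow> T t1 \<le> T t2"
    using reparam[OF Kc Kb fl yK] by blast
  have z0: "z 0 = y" using Tz T0 flow_facts(2)[OF fl yK] by force
  define uT where "uT = T t"
  have uT0: "uT \<ge> 0" and zT: "Phi t y = z uT" using Tz t0 uT_def by auto
  define RT where "RT = distK K (z uT)"
  define FT where "FT = FK K (z uT)"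
  have RTy: "RT \<ge> distK K y" using R_mono[OF Kc Kne z order_refl uT0] z0 RT_def by simp
  have RTa: "RT > \<alpha>" "RT > 0" using RTy yR l0 a0 by auto
  have "FK (offset K \<alpha>) (z uT) < l" using tax zT unfolding axis_def by simp
  moreover have "(RT - \<alpha>) * FT \<le> FK (offset K \<alpha>) (z uT) * RT"
    using offset_F[OF Kc Kne a0, of "z uT"] RTa RT_def FT_def by simp
  ultimately have endc: "(RT - \<alpha>) * FT \<le> l * RT" using RTa
    by (smt (verit) mult_strict_right_mono)
  have hyp: "\<forall>u\<in>{0..uT}. distK K (z u) - \<alpha> > l \<and> (distK K (z u) - \<alpha>) * FK K (z u) \<le> l * distK K (z u)"
  proof
    fix u assume u: "u \<in> {0..uT}"
    define Ru where "Ru = distK K (z u)"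
    define Fu where "Fu = FK K (z u)"
    have Ruy: "Ru \<ge> distK K y" using R_mono[OF Kc Kne z order_refl, of u] z0 u Ru_def by simp
    have RuT: "Ru \<le> RT" using R_mono[OF Kc Kne z, of u uT] u Ru_def RT_def by simp
    have FuT: "Fu \<le> FT" using F_mono[OF Kc Kne z, of u uT] u Fu_def FT_def by simp
    have Fu0: "Fu \<ge> 0" using point_facts(4)[OF Kc Kne tflow_facts(1)[OF z, of u]] u Fu_def by simp
    have Ru0: "Ru > \<alpha>" using Ruy yR l0 by simp
    have "Ru * \<alpha> \<le> RT * \<alpha>" using RuT a0 by (rule mult_right_mono)
    then have s1: "(Ru - \<alpha>) * RT \<le> (RT - \<alpha>) * Ru" by (simp add: algebra_simps)
    have "((Ru - \<alpha>) * Fu) * RT = ((Ru - \<alpha>) * RT) * Fu" by simp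
    also have "\<dots> \<le> ((RT - \<alpha>) * Ru) * Fu" using s1 Fu0 by (rule mult_right_mono)
    also have "\<dots> = ((RT - \<alpha>) * Fu) * Ru" by simp
    also have "\<dots> \<le> ((RT - \<alpha>) * FT) * Ru" using FuT RTa Ru0 a0 by (intro mult_right_mono mult_left_mono) auto
    also have "\<dots> \<le> (l * RT) * Ru" using endc Ru0 a0 by (intro mult_right_mono) auto
    also have "\<dots> = (l * Ru) * RT" by simp
    finally have "((Ru - \<alpha>) * Fu) * RT \<le> (l * Ru) * RT" .
    then have "(Ru - \<alpha>) * Fu \<le> l * Ru" using RTa by simp
    moreover have "Ru - \<alpha> > l" using Ruy yR by simp
    ultimately show "distK K (z u) - \<alpha> > l \<and> (distK K (z u) - \<alpha>) * FK K (z u) \<le> l * distK K (z u)"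
      using Ru_def Fu_def by simp
  qed
  define G where "G p = sqrt ((distK K p - \<alpha>)\<^sup>2 - l\<^sup>2)" for p
  have ch: "dist (Phi a y) (Phi b y) \<le> G (Phi b y) - G (Phi a y)" if ab: "0 \<le> a" "a \<le> b" "b \<le> t" for a b
  proof -
    have ua: "0 \<le> T a" "T a \<le> T b" "T b \<le> uT" using Tz Tm ab uT_def by auto
    have "norm (z (T b) - z (T a)) \<le> sqrt ((distK K (z (T b)) - \<alpha>)\<^sup>2 - l\<^sup>2) - sqrt ((distK K (z (T a)) - \<alpha>)\<^sup>2 - l\<^sup>2)"
      by (rule chord[OF Kc Kne z ua(1,2) l0]) (use hyp ua in auto)
    moreover have "Phi a y = z (T a)" "Phi b y = z (T b)" using Tz ab by auto
    ultimately show ?thesis unfolding G_def by (simp add: dist_norm norm_minus_commute)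
  qed
  define L where "L = arc_length (\<lambda>\<tau>. Phi \<tau> y) 0 t"
  have Lle: "L \<le> G (Phi t y) - G (Phi 0 y)" unfolding L_def arc_length_def
  proof (rule cSup_least)
    show "{\<Sum>i<n. dist (Phi (p i) y) (Phi (p (Suc i)) y) |p n. p 0 = 0 \<and> p n = t \<and> (\<forall>i<n. p i \<le> p (Suc i))} \<noteq> {}"
    proof -
      define p0 where "p0 i = (if i = 0 then 0 else t)" for i :: nat
      have "p0 0 = 0 \<and> p0 1 = t \<and> (\<forall>i<1. p0 i \<le> p0 (Suc i))" using t0 p0_def by simp
      then show ?thesis by blast
    qed
  next
    fix x assume "x \<in> {\<Sum>i<n. dist (Phi (p i) y) (Phi (p (Suc i)) y) |p n. p 0 = 0 \<and> p n = t \<and> (\<forall>i<n. p i \<le> p (Suc i))}"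
    then obtain p n where x: "x = (\<Sum>i<n. dist (Phi (p i) y) (Phi (p (Suc i)) y))"
      and p: "p 0 = 0" "p n = t" "\<forall>i<n. p i \<le> p (Suc i)" by blast
    have "(\<Sum>i<n. dist ((\<lambda>s. Phi s y) (p i)) ((\<lambda>s. Phi s y) (p (Suc i)))) \<le> (\<lambda>s. G (Phi s y)) (p n) - (\<lambda>s. G (Phi s y)) (p 0)"
      by (rule telescope[OF p(3)]) (use ch p in auto)
    then show "x \<le> G (Phi t y) - G (Phi 0 y)" using x p by simp
  qed
  have y0: "Phi 0 y = y" by (rule flow_facts(2)[OF fl yK])
  have "l\<^sup>2 \<le> (distK K y - \<alpha>)\<^sup>2" using yR l0 by (intro power_mono) auto
  then have S0: "G y \<ge> 0" unfolding G_def by simp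
  have "RT - \<alpha> > l" using RTy yR by simp
  then have "l\<^sup>2 < (RT - \<alpha>)\<^sup>2" using l0 by (intro power_strict_mono) auto
  then have GT: "(G (Phi t y))\<^sup>2 = (RT - \<alpha>)\<^sup>2 - l\<^sup>2" unfolding G_def zT RT_def by simp
  have "G y + L \<le> G (Phi t y)" using Lle y0 by simp
  moreover have "0 \<le> G y + L" using S0 L0 L_def by simp
  ultimately have "(G y + L)\<^sup>2 \<le> (G (Phi t y))\<^sup>2" by (intro power_mono)
  then show ?thesis using GT unfolding G_def L_def RT_def zT by simp
qed

end
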